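(* Let $(E,[\![\cdot,\cdot]\!],\langle\cdot,\cdot\rangle,\rho)$ be a Courant algebroid over $M$ with Courant–Dorfman algebra $\mathcal C=\bigoplus_{p\ge0}\mathcal C^p$ and differential $d$ as in the context. For all $\omega\in\mathcal C^p$ and $\eta\in\mathcal C^q$, $$d(\omega\cdot\eta)=d\omega\cdot\eta+(-1)^p\,\omega\cdot d\eta .$$
   Context: Let $M$ be a smooth manifold, $\mathcal R=C^\infty(M)$, $\Omega^1=\Gamma(T^*M)$. A Courant algebroid is a vector bundle $E\to M$ with a fibrewise nondegenerate symmetric bilinear form $\langle\cdot,\cdot\rangle$, an $\mathbb R$-bilinear bracket $[\![\cdot,\cdot]\!]$ on $\Gamma(E)$ and a bundle map $\rho:E\to TM$ such that for all $e_1,e_2,e_3\in\Gamma(E)$: $[\![e_1,[\![e_2,e_3]\!]]\!]=[\![[\![e_1,e_2]\!],e_3]\!]+[\![e_2,[\![e_1,e_3]\!]]\!]$; $\rho(e_1)\langle e_2,e_3\rangle=\langle[\![e_1,e_2]\!],e_3\rangle+\langle e_2,[\![e_1,e_3]\!]\rangle$; $[\![e_1,e_2]\!]+[\![e_2,e_1]\!]=d_E\langle e_1,e_2\rangle$, where $d_E:\mathcal R\to\Gamma(E)$ is defined by $\langle d_Ef,e\rangle=\rho(e)(f)$. Write $\mathcal E=\Gamma(E)$. Cochains. For $p\ge1$ a $p$-cochain is a tuple $\omega=(\omega_0,\dots,\omega_{[p/2]})$ of $\mathbb R$-multilinear maps $\omega_k:\mathcal E^{\otimes(p-2k)}\otimes(\Omega^1)^{\otimes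 k}\to\mathcal R$, symmetric in the $\Omega^1$-arguments, such that for $1\le i<p-2k$: $\omega_k(\dots,e_i,e_{i+1},\dots;\alpha_1,\dots,\alpha_k)+\omega_k(\dots,e_{i+1},e_i,\dots;\alpha_1,\dots,\alpha_k)=-\omega_{k+1}(\dots,\widehat{e_i},\widehat{e_{i+1}},\dots;d\langle e_i,e_{i+1}\rangle,\alpha_1,\dots,\alpha_k)$. $0$-cochains are elements of $\mathcal R$. These form a graded algebra $\mathcal A$ with product: for $\omega$ of degree $p$, $\eta$ of degree $q$, $(\omega\cdot\eta)_k(e_1,\dots,e_{p+q-2k};\alpha_1,\dots,\alpha_k)=\sum_{i+j=k,\,i\le[p/2],\,j\le[q/2]}\ \sum_{\sigma\in sh(p-2i,q-2j)}\sum_{\tau\in sh(i,j)}(-1)^{|\sigma|}\omega_i(e_{\sigma(1)},\dots,e_{\sigma(p-2i)};\alpha_{\tau(1)},\dots,\alpha_{\tau(i)})\,\eta_j(e_{\sigma(p-2i+1)},\dots,e_{\sigma(p+q-2k)};\alpha_{\tau(i+1)},\dots,\alpha_{\tau(k)})$, where $sh(a,b)$ is the set of $(a,b)$-shuffles and $(-1)^{|\sigma|}$ the sign. The Courant–Dorfman algebra $\mathcal C=\bigoplus_p\mathcal C^p$ consists of $\mathcal C^0=\mathcal R$ and those $p$-cochains with each $\omega_k$ $\mathcal R$-linear in every $\Omega^1$-argument and in the last $\mathcal E$-argument. Write $\omega_k(e_1,\dots;f_1,\dots,f_k):=\omega_k(e_1,\dots;df_1,\dots,df_k)$. The differential $d:\mathcal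 C^p\to\mathcal C^{p+1}$ is $(d\omega)_k(e_1,\dots,e_{p+1-2k};f_1,\dots,f_k)=\sum_{\mu=1}^k\omega_{k-1}(d_Ef_\mu,e_1,\dots,e_{p+1-2k};f_1,\dots,\widehat{f_\mu},\dots,f_k)+\sum_{i=1}^{p+1-2k}(-1)^{i-1}\rho(e_i)\big(\omega_k(e_1,\dots,\widehat{e_i},\dots;f_1,\dots,f_k)\big)+\sum_{i<j}(-1)^i\omega_k(e_1,\dots,\widehat{e_i},\dots,\widehat{e_j},[\![e_i,e_j]\!],e_{j+1},\dots,e_{p+1-2k};f_1,\dots,f_k)$ (for $p=0$: $(df)(e)=\rho(e)f$). *)

theory Defs
  imports Complex_Main "HOL-Combinatorics.Permutations" "HOL-Library.Multiset"
begin

text \<open>Abstract algebraic rendering of a Courant algebroid over M.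
  'r plays the role of R = smooth functions on M (a commutative real algebra),
  'e the sections of E, 'o the 1-forms Omega^1, with module actions smE, smO,
  de Rham differential dR : R -> Omega^1, pairing ip, bracket br, anchor rho
  (rho e f = rho(e)(f)) and dE : R -> sections of E.\<close>

definition module_ax :: "('r::comm_ring_1 \<Rightarrow> 'm::ab_group_add \<Rightarrow> 'm) \<Rightarrow> bool" where
  "module_ax sm \<longleftrightarrow>
     (\<forall>a b x. sm (a * b) x = sm a (sm b x)) \<and> (\<forall>x. sm 1 x = x) \<and>
     (\<forall>a b x. sm (a + b) x = sm a x + sm b x) \<and> (\<forall>a x y. sm a (x + y) = sm a x + sm a y)"

definition courant_algebroid ::
  "('r::{comm_ring_1,real_algebra_1} \<Rightarrow> 'e::ab_group_add \<Rightarrow> 'e) \<Rightarrow> ('r \<Rightarrow> 'o::ab_group_add \<Rightarrow> 'o)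
   \<Rightarrow> ('r \<Rightarrow> 'o) \<Rightarrow> ('e \<Rightarrow> 'e \<Rightarrow> 'r) \<Rightarrow> ('e \<Rightarrow> 'e \<Rightarrow> 'e) \<Rightarrow> ('e \<Rightarrow> 'r \<Rightarrow> 'r) \<Rightarrow> ('r \<Rightarrow> 'e) \<Rightarrow> bool"
where
  "courant_algebroid smE smO dR ip br rho dE \<longleftrightarrow>
     module_ax smE \<and> module_ax smO \<and>
     \<comment> \<open>de Rham differential on functions\<close>
     (\<forall>f g. dR (f + g) = dR f + dR g) \<and>
     (\<forall>c f. dR (scaleR c f) = smO (of_real c) (dR f)) \<and>
     (\<forall>f g. dR (f * g) = smO f (dR g) + smO g (dR f)) \<and>
     \<comment> \<open>symmetric, R-bilinear, nondegenerate pairing\<close>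
     (\<forall>x y. ip x y = ip y x) \<and>
     (\<forall>x y z. ip (x + y) z = ip x z + ip y z) \<and>
     (\<forall>g x y. ip (smE g x) y = g * ip x y) \<and>
     (\<forall>x. (\<forall>y. ip x y = 0) \<longrightarrow> x = 0) \<and>
     \<comment> \<open>anchor: R-linear in sections, each rho(e) a vector field (R-linear derivation)\<close>
     (\<forall>x y f. rho (x + y) f = rho x f + rho y f) \<and>
     (\<forall>g x f. rho (smE g x) f = g * rho x f) \<and>
     (\<forall>x f g. rho x (f + g) = rho x f + rho x g) \<and>
     (\<forall>x c f. rho x (scaleR c f) = scaleR c (rho x f)) \<and>
     (\<forall>x f g. rho x (f * g) = f * rho x g + g * rho x f) \<and>
     \<comment> \<open>R-bilinear bracket (real scalars act through of_real)\<close>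
     (\<forall>x y z. br (x + y) z = br x z + br y z) \<and>
     (\<forall>x y z. br x (y + z) = br x y + br x z) \<and>
     (\<forall>c x y. br (smE (of_real c) x) y = smE (of_real c) (br x y)) \<and>
     (\<forall>c x y. br x (smE (of_real c) y) = smE (of_real c) (br x y)) \<and>
     \<comment> \<open>definition of d_E\<close>
     (\<forall>f e. ip (dE f) e = rho e f) \<and>
     \<comment> \<open>Courant algebroid axioms\<close>
     (\<forall>e1 e2 e3. br e1 (br e2 e3) = br (br e1 e2) e3 + br e2 (br e1 e3)) \<and>
     (\<forall>e1 e2 e3. rho e1 (ip e2 e3) = ip (br e1 e2) e3 + ip e2 (br e1 e3)) \<and>
     (\<forall>e1 e2. br e1 e2 + br e2 e1 = dE (ip e1 e2))"

definition del :: "nat \<Rightarrow> 'a list \<Rightarrow> 'a list" where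
  "del i xs = take i xs @ drop (Suc i) xs"

text \<open>A p-cochain: component omega k takes p-2k section arguments and k 1-form arguments
  (positions are 0-based).\<close>
definition cochain ::
  "('r::{comm_ring_1,real_algebra_1} \<Rightarrow> 'e::ab_group_add \<Rightarrow> 'e) \<Rightarrow> ('r \<Rightarrow> 'o::ab_group_add \<Rightarrow> 'o)
   \<Rightarrow> ('r \<Rightarrow> 'o) \<Rightarrow> ('e \<Rightarrow> 'e \<Rightarrow> 'r) \<Rightarrow> nat \<Rightarrow> (nat \<Rightarrow> 'e list \<Rightarrow> 'o list \<Rightarrow> 'r) \<Rightarrow> bool"
where
  "cochain smE smO dR ip p \<omega> \<longleftrightarrow>
    (\<forall>k \<le> p div 2. \<forall>es \<alpha>s. length es = p - 2 * k \<longrightarrow> length \<alpha>s = k \<longrightarrow>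
      (\<forall>i < length es. \<forall>x y. \<omega> k (es[i := x + y]) \<alpha>s = \<omega> k (es[i := x]) \<alpha>s + \<omega> k (es[i := y]) \<alpha>s) \<and>
      (\<forall>i < length es. \<forall>c x. \<omega> k (es[i := smE (of_real c) x]) \<alpha>s = of_real c * \<omega> k (es[i := x]) \<alpha>s) \<and>
      (\<forall>j < k. \<forall>\<beta> \<gamma>. \<omega> k es (\<alpha>s[j := \<beta> + \<gamma>]) = \<omega> k es (\<alpha>s[j := \<beta>]) + \<omega> k es (\<alpha>s[j := \<gamma>])) \<and>
      (\<forall>j < k. \<forall>c \<beta>. \<omega> k es (\<alpha>s[j := smO (of_real c) \<beta>]) = of_real c * \<omega> k es (\<alpha>s[j := \<beta>])) \<and>
      (\<forall>\<beta>s. mset \<beta>s = mset \<alpha>s \<longrightarrow> \<omega> k es \<beta>s = \<omega> k es \<alpha>s) \<and>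
      (\<forall>i. Suc i < length es \<longrightarrow>
          \<omega> k es \<alpha>s + \<omega> k (es[i := es ! Suc i, Suc i := es ! i]) \<alpha>s =
          - \<omega> (Suc k) (take i es @ drop (i + 2) es) (dR (ip (es ! i) (es ! Suc i)) # \<alpha>s)))"

text \<open>Elements of the Courant-Dorfman algebra C^p (for p = 0 only omega 0 [] [] matters).\<close>
definition cd_cochain ::
  "('r::{comm_ring_1,real_algebra_1} \<Rightarrow> 'e::ab_group_add \<Rightarrow> 'e) \<Rightarrow> ('r \<Rightarrow> 'o::ab_group_add \<Rightarrow> 'o)
   \<Rightarrow> ('r \<Rightarrow> 'o) \<Rightarrow> ('e \<Rightarrow> 'e \<Rightarrow> 'r) \<Rightarrow> nat \<Rightarrow> (nat \<Rightarrow> 'e list \<Rightarrow> 'o list \<Rightarrow> 'r) \<Rightarrow> bool"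
where
  "cd_cochain smE smO dR ip p \<omega> \<longleftrightarrow> cochain smE smO dR ip p \<omega> \<and>
    (\<forall>k \<le> p div 2. \<forall>es \<alpha>s. length es = p - 2 * k \<longrightarrow> length \<alpha>s = k \<longrightarrow>
      (\<forall>j < k. \<forall>g \<beta>. \<omega> k es (\<alpha>s[j := smO g \<beta>]) = g * \<omega> k es (\<alpha>s[j := \<beta>])) \<and>
      (es \<noteq> [] \<longrightarrow> (\<forall>g x. \<omega> k (es[length es - 1 := smE g x]) \<alpha>s = g * \<omega> k (es[length es - 1 := x]) \<alpha>s)))"

definition shuffles :: "nat \<Rightarrow> nat \<Rightarrow> (nat \<Rightarrow> nat) set" where
  "shuffles a b = {\<sigma>. \<sigma> permutes {..<a + b} \<and>
      (\<forall>x y. x < y \<and> y < a \<longrightarrow> \<sigma> x < \<sigma> y) \<and>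
      (\<forall>x y. a \<le> x \<and> x < y \<and> y < a + b \<longrightarrow> \<sigma> x < \<sigma> y)}"

definition cprod ::
  "nat \<Rightarrow> (nat \<Rightarrow> 'e list \<Rightarrow> 'a list \<Rightarrow> 'r::comm_ring_1) \<Rightarrow> nat \<Rightarrow> (nat \<Rightarrow> 'e list \<Rightarrow> 'a list \<Rightarrow> 'r)
   \<Rightarrow> nat \<Rightarrow> 'e list \<Rightarrow> 'a list \<Rightarrow> 'r"
where
  "cprod p \<omega> q \<eta> k es \<alpha>s =
    (\<Sum>i \<in> {i. i \<le> k \<and> i \<le> p div 2 \<and> k - i \<le> q div 2}.
      \<Sum>\<sigma> \<in> shuffles (p - 2 * i) (q - 2 * (k - i)). \<Sum>\<tau> \<in> shuffles i (k - i).
        of_int (sign \<sigma>) * \<omega> i (map (\<lambda>l. es ! \<sigma> l) [0..<p - 2 * i]) (map (\<lambda>l. \<alpha>s ! \<tau> l) [0..<i])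
               * \<eta> (k - i) (map (\<lambda>l. es ! \<sigma> l) [p - 2 * i..<p + q - 2 * k]) (map (\<lambda>l. \<alpha>s ! \<tau> l) [i..<k]))"

text \<open>The notation omega_k(e;f_1..f_k) := omega_k(e;df_1..df_k).\<close>
definition toF :: "('r \<Rightarrow> 'o) \<Rightarrow> (nat \<Rightarrow> 'e list \<Rightarrow> 'o list \<Rightarrow> 'r) \<Rightarrow> nat \<Rightarrow> 'e list \<Rightarrow> 'r list \<Rightarrow> 'r" where
  "toF dR \<omega> k es fs = \<omega> k es (map dR fs)"

text \<open>The differential (component k), with 0-based indices: (-1)^(i-1) becomes (-1)^i and
  (-1)^i becomes (-1)^(i+1).\<close>
definition dF ::
  "('e \<Rightarrow> 'e \<Rightarrow> 'e) \<Rightarrow> ('e \<Rightarrow> 'r::comm_ring_1 \<Rightarrow> 'r) \<Rightarrow> ('r \<Rightarrow> 'e)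
   \<Rightarrow> (nat \<Rightarrow> 'e list \<Rightarrow> 'r list \<Rightarrow> 'r) \<Rightarrow> nat \<Rightarrow> 'e list \<Rightarrow> 'r list \<Rightarrow> 'r"
where
  "dF br rho dE \<omega> k es fs =
     (\<Sum>\<mu> < k. \<omega> (k - 1) (dE (fs ! \<mu>) # es) (del \<mu> fs))
   + (\<Sum>i < length es. (-1) ^ i * rho (es ! i) (\<omega> k (del i es) fs))
   + (\<Sum>j < length es. \<Sum>i < j. (-1) ^ Suc i * \<omega> k (del i (es[j := br (es ! i) (es ! j)])) fs)"

end

theory Submission
  imports Defs
begin

lemma nths_cong_len:
  assumes "\<And>i. i < length xs \<Longrightarrow> i \<in> A \<longleftrightarrow> i \<in> B"
  shows "nths xs A = nths xs B"
  unfolding nths_def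
proof -
  have "filter (\<lambda>p. snd p \<in> A) (zip xs [0..<length xs]) = filter (\<lambda>p. snd p \<in> B) (zip xs [0..<length xs])"
    by (rule filter_cong) (auto simp: set_zip assms)
  then show "map fst (filter (\<lambda>p. snd p \<in> A) (zip xs [0..<length xs])) =
    map fst (filter (\<lambda>p. snd p \<in> B) (zip xs [0..<length xs]))" by simp
qed

lemma nths_split:
  assumes "i < length xs"
  shows "nths xs A = nths (take i xs) A @ (if i \<in> A then [xs!i] else []) @ nths (drop (Suc i) xs) {j. j + Suc i \<in> A}"
proof -
  have "xs = take i xs @ (xs!i # drop (Suc i) xs)" using assms by (simp add: id_take_nth_drop)
  then have "nths xs A = nths (take i xs @ (xs!i # drop (Suc i) xs)) A" by simp
  also have "\<dots> = nths (take i xs) A @ (if i \<in> A then [xs!i] else []) @ nths (drop (Suc i) xs) {j. j + Suc i \<in> A}"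
    using assms by (simp add: nths_append nths_Cons min_def)
  finally show ?thesis .
qed

lemma nths_sorted_list:
  assumes "sorted_wrt (<) L" "\<forall>x\<in>set L. x < length xs"
  shows "map (nth xs) L = nths xs (set L)"
  using assms
proof (induction L)
  case Nil then show ?case by simp
next
  case (Cons l L)
  have IH: "map (nth xs) L = nths xs (set L)" using Cons by simp
  have gt: "\<forall>x\<in>set L. l < x" using Cons.prems by simp
  have ll: "l < length xs" using Cons.prems by simp
  have e1: "nths (take l xs) (insert l (set L)) = []"
    by (subst nths_cong_len[where B="{}"]) (use gt in auto)
  have e2: "nths (take l xs) (set L) = []"
    by (subst nths_cong_len[where B="{}"]) (use gt in auto)
  have e3: "{j. j + Suc l \<in> insert l (set L)} = {j. j + Suc l \<in> set L}" by auto
  have "nths xs (insert l (set L)) = xs ! l # nths xs (set L)"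
    using nths_split[OF ll, of "insert l (set L)"] nths_split[OF ll, of "set L"] e1 e2 e3 gt
    by auto
  then show ?case using IH by simp
qed

lemma swap_adj_mono:
  assumes "u < v" "\<not> (u = t \<and> v = Suc t)"
  shows "transpose t (Suc t) u < transpose t (Suc t) v"
  using assms by (auto simp: transpose_def)

lemma shufflesD:
  assumes "\<sigma> \<in> shuffles a b"
  shows "\<sigma> permutes {..<a+b}" "\<And>x y. x < y \<Longrightarrow> y < a \<Longrightarrow> \<sigma> x < \<sigma> y"
    "\<And>x y. a \<le> x \<Longrightarrow> x < y \<Longrightarrow> y < a + b \<Longrightarrow> \<sigma> x < \<sigma> y"
  using assms unfolding shuffles_def by auto

lemma shuffle_lists:
  assumes "\<sigma> \<in> shuffles a b"
  shows "sorted_wrt (<) (map \<sigma> [0..<a])" "set (map \<sigma> [0..<a]) = \<sigma> ` {..<a}"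
    "sorted_wrt (<) (map \<sigma> [a..<a+b])" "set (map \<sigma> [a..<a+b]) = {..<a+b} - \<sigma> ` {..<a}"
    "\<sigma> ` {..<a} \<subseteq> {..<a+b}"
proof -
  note D = shufflesD[OF assms]
  show "sorted_wrt (<) (map \<sigma> [0..<a])"
    unfolding sorted_wrt_map by (auto simp: sorted_wrt_iff_nth_less intro: D(2))
  show "set (map \<sigma> [0..<a]) = \<sigma> ` {..<a}" by auto
  show "sorted_wrt (<) (map \<sigma> [a..<a+b])"
    unfolding sorted_wrt_map by (auto simp: sorted_wrt_iff_nth_less intro: D(3))
  have im: "\<sigma> ` {..<a+b} = {..<a+b}" using D(1) by (rule permutes_image)
  have inj: "inj_on \<sigma> {..<a+b}" using D(1) permutes_inj_on by blast
  have "{..<a+b} = {..<a} \<union> {a..<a+b}" by auto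
  then have "\<sigma> ` {a..<a+b} = {..<a+b} - \<sigma> ` {..<a}"
    using im inj by (metis Diff_cancel Diff_subset inj_on_image_set_diff ivl_diff lessThan_minus_lessThan lessThan_subset_iff le_add1)
  then show "set (map \<sigma> [a..<a+b]) = {..<a+b} - \<sigma> ` {..<a}" by simp
  show "\<sigma> ` {..<a} \<subseteq> {..<a+b}" using im by auto
qed

lemma shuffle_W:
  assumes "\<sigma> \<in> shuffles a b" "length xs = a + b"
  shows "map (\<lambda>l. xs ! \<sigma> l) [0..<a] = nths xs (\<sigma> ` {..<a})"
proof -
  note L = shuffle_lists[OF assms(1)]
  have "map (\<lambda>l. xs ! \<sigma> l) [0..<a] = map (nth xs) (map \<sigma> [0..<a])" by simp
  also have "\<dots> = nths xs (set (map \<sigma> [0..<a]))"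
    by (rule nths_sorted_list) (use L assms(2) in auto)
  finally show ?thesis using L by simp
qed

lemma shuffle_H:
  assumes "\<sigma> \<in> shuffles a b" "length xs = a + b"
  shows "map (\<lambda>l. xs ! \<sigma> l) [a..<a+b] = nths xs (- (\<sigma> ` {..<a}))"
proof -
  note L = shuffle_lists[OF assms(1)]
  have "map (\<lambda>l. xs ! \<sigma> l) [a..<a+b] = map (nth xs) (map \<sigma> [a..<a+b])" by simp
  also have "\<dots> = nths xs (set (map \<sigma> [a..<a+b]))"
    by (rule nths_sorted_list) (use L assms(2) in auto)
  also have "\<dots> = nths xs (- (\<sigma> ` {..<a}))"
    by (rule nths_cong_len) (use L assms(2) in auto)
  finally show ?thesis .
qed

lemma strict_sorted_eq:
  assumes "sorted_wrt (<) (xs::nat list)" "sorted_wrt (<) ys" "set xs = set ys"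
  shows "xs = ys"
  using assms by (metis sorted_distinct_set_unique strict_sorted_iff)

lemma shuffle_unique:
  assumes "\<sigma>1 \<in> shuffles a b" "\<sigma>2 \<in> shuffles a b" "\<sigma>1 ` {..<a} = \<sigma>2 ` {..<a}"
  shows "\<sigma>1 = \<sigma>2"
proof
  fix x
  note L1 = shuffle_lists[OF assms(1)] and L2 = shuffle_lists[OF assms(2)]
  have A: "map \<sigma>1 [0..<a] = map \<sigma>2 [0..<a]"
    by (rule strict_sorted_eq) (use L1 L2 assms(3) in auto)
  have B: "map \<sigma>1 [a..<a+b] = map \<sigma>2 [a..<a+b]"
    by (rule strict_sorted_eq) (use L1 L2 assms(3) in auto)
  show "\<sigma>1 x = \<sigma>2 x"
  proof (cases "x < a")
    case True
    then show ?thesis using arg_cong[OF A, of "\<lambda>l. l ! x"] by simp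
  next
    case False
    show ?thesis
    proof (cases "x < a + b")
      case True
      then show ?thesis using False arg_cong[OF B, of "\<lambda>l. l ! (x - a)"] by simp
    next
      case False
      then show ?thesis using shufflesD(1)[OF assms(1)] shufflesD(1)[OF assms(2)]
        by (simp add: permutes_def)
    qed
  qed
qed

lemma id_shuffle: "id \<in> shuffles a b"
  unfolding shuffles_def using permutes_id by simp

lemma downclosed_eq:
  assumes "finite S" "\<And>t. Suc t \<in> S \<Longrightarrow> t \<in> S"
  shows "S = {..<card S}"
proof -
  have dc: "y \<in> S" if "x \<in> S" "y \<le> x" for x y
    using that
  proof (induction x arbitrary: y)
    case 0 then show ?case by simp
  next
    case (Suc x)
    show ?case
    proof (cases "y = Suc x")
      case True then show ?thesis using Suc.prems by simp
    next
      case False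
      then have "y \<le> x" using Suc.prems by simp
      moreover have "x \<in> S" using assms(2) Suc.prems by blast
      ultimately show ?thesis using Suc.IH by blast
    qed
  qed
  show ?thesis
  proof (cases "S = {}")
    case True then show ?thesis by simp
  next
    case False
    let ?m = "Suc (Max S)"
    have "S = {..<?m}"
    proof (intro set_eqI iffI)
      fix x assume "x \<in> S" then show "x \<in> {..<?m}" using Max_ge[OF assms(1)] by (simp add: less_Suc_eq_le)
    next
      fix x assume "x \<in> {..<?m}" then show "x \<in> S" using dc Max_in[OF assms(1) False] by (simp add: less_Suc_eq_le)
    qed
    then show ?thesis by (metis card_lessThan)
  qed
qed

lemma exists_gap:
  assumes "S \<subseteq> {..<n}" "card S = a" "S \<noteq> {..<a}"
  obtains t where "t \<notin> S" "Suc t \<in> S" "Suc t < n"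
proof -
  have fin: "finite S" using assms(1) finite_subset by blast
  have "\<exists>t. t \<notin> S \<and> Suc t \<in> S"
  proof (rule ccontr)
    assume "\<not> ?thesis"
    then have "S = {..<card S}" using downclosed_eq[OF fin] by blast
    then show False using assms by simp
  qed
  then show ?thesis using that assms(1) by blast
qed

lemma sum_insert_remove:
  assumes "finite S" "t \<notin> S" "Suc t \<in> S"
  shows "\<Sum>(insert t (S - {Suc t})) + 1 = \<Sum>S"
proof -
  have "\<Sum>(insert t (S - {Suc t})) = t + \<Sum>(S - {Suc t})" using assms by simp
  moreover have "\<Sum>S = Suc t + \<Sum>(S - {Suc t})" using assms by (simp add: sum.remove)
  ultimately show ?thesis by simp
qed

lemma shuffle_sign:
  assumes "\<sigma> \<in> shuffles a b"
  shows "sign \<sigma> = (-1) ^ (\<Sum>(\<sigma> ` {..<a}) + \<Sum>{..<a})"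
  using assms
proof (induction "\<Sum>(\<sigma> ` {..<a})" arbitrary: \<sigma> rule: less_induct)
  case less
  let ?S = "\<sigma> ` {..<a}"
  note L = shuffle_lists[OF less.prems]
  note D = shufflesD[OF less.prems]
  have inj: "inj_on \<sigma> {..<a+b}" using D(1) permutes_inj_on by blast
  have cardS: "card ?S = a"
    using inj by (simp add: card_image inj_on_subset[of _ "{..<a+b}"])
  show ?case
  proof (cases "?S = {..<a}")
    case True
    then have "\<sigma> = id" using shuffle_unique[OF less.prems id_shuffle] by simp
    then show ?thesis using True by simp
  next
    case False
    obtain t where t: "t \<notin> ?S" "Suc t \<in> ?S" "Suc t < a + b"
      using exists_gap[OF L(5) cardS False] by blast
    define \<sigma>' where "\<sigma>' = transpose t (Suc t) \<circ> \<sigma>"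
    have tp: "transpose t (Suc t) permutes {..<a+b}" using t by (intro permutes_swap_id) auto
    have sh: "\<sigma>' \<in> shuffles a b"
      unfolding shuffles_def
    proof (intro CollectI conjI allI impI)
      show "\<sigma>' permutes {..<a+b}" unfolding \<sigma>'_def using D(1) tp by (rule permutes_compose)
    next
      fix x y assume "x < y \<and> y < a"
      then show "\<sigma>' x < \<sigma>' y" unfolding \<sigma>'_def using D(2) t(1)
        by (auto intro!: swap_adj_mono)
    next
      fix x y assume xy: "a \<le> x \<and> x < y \<and> y < a + b"
      have "\<sigma> y \<in> set (map \<sigma> [a..<a+b])" using xy by auto
      then have "\<sigma> y \<notin> ?S" using L(4) by blast
      then have "\<sigma> y \<noteq> Suc t" using t by auto
      then show "\<sigma>' x < \<sigma>' y" unfolding \<sigma>'_def using D(3) xy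
        by (auto intro!: swap_adj_mono)
    qed
    have img: "\<sigma>' ` {..<a} = insert t (?S - {Suc t})"
    proof -
      have "\<sigma>' ` {..<a} = transpose t (Suc t) ` ?S" unfolding \<sigma>'_def by (simp add: image_comp)
      also have "\<dots> = insert t (?S - {Suc t})"
      proof (intro set_eqI iffI)
        fix z assume "z \<in> transpose t (Suc t) ` ?S"
        then obtain w where w: "w \<in> ?S" "z = transpose t (Suc t) w" by blast
        then show "z \<in> insert t (?S - {Suc t})" using t(1) by (auto simp: transpose_def)
      next
        fix z assume z: "z \<in> insert t (?S - {Suc t})"
        show "z \<in> transpose t (Suc t) ` ?S"
        proof (cases "z = t")
          case True
          then have "z = transpose t (Suc t) (Suc t)" by simp
          then show ?thesis using t(2) by blast
        next
          case False
          then have "z \<in> ?S" "z \<noteq> Suc t" using z by auto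
          moreover have "z \<noteq> t" using False .
          ultimately have "z = transpose t (Suc t) z" "z \<in> ?S" by (auto simp: transpose_def)
          then show ?thesis by blast
        qed
      qed
      finally show ?thesis .
    qed
    have fin: "finite ?S" by simp
    have sums: "\<Sum>(\<sigma>' ` {..<a}) + 1 = \<Sum>?S" using sum_insert_remove[OF fin t(1,2)] img by simp
    have IH: "sign \<sigma>' = (-1) ^ (\<Sum>(\<sigma>' ` {..<a}) + \<Sum>{..<a})"
      using less.hyps[of \<sigma>'] sums sh by simp
    have perm: "permutation \<sigma>" using D(1) permutation_permutes by blast
    have "sign \<sigma>' = sign (transpose t (Suc t)) * sign \<sigma>"
      unfolding \<sigma>'_def by (rule sign_compose) (use perm tp permutation_permutes in auto)
    then have "sign \<sigma>' = - sign \<sigma>" by (simp add: sign_swap_id)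
    then have "sign \<sigma> = - ((-1) ^ (\<Sum>(\<sigma>' ` {..<a}) + \<Sum>{..<a}))" using IH by simp
    also have "\<dots> = (-1) ^ (\<Sum>(\<sigma>' ` {..<a}) + 1 + \<Sum>{..<a})" by simp
    finally show ?thesis using sums by (metis add_Suc_shift Suc_eq_plus1)
  qed
qed

lemma shuffle_exists:
  assumes "S \<subseteq> {..<a+b}" "card S = a"
  shows "\<exists>\<sigma>\<in>shuffles a b. \<sigma> ` {..<a} = S"
proof -
  have finS: "finite S" using assms(1) finite_subset by blast
  have finD: "finite ({..<a+b} - S)" by simp
  define L1 where "L1 = sorted_list_of_set S"
  define L2 where "L2 = sorted_list_of_set ({..<a+b} - S)"
  have L1: "sorted_wrt (<) L1" "set L1 = S" unfolding L1_def using finS by simp_all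
  have L2: "sorted_wrt (<) L2" "set L2 = {..<a+b} - S" unfolding L2_def using finD by simp_all
  have d1: "distinct L1" using L1(1) strict_sorted_iff by blast
  have d2: "distinct L2" using L2(1) strict_sorted_iff by blast
  have len1: "length L1 = a" using distinct_card[OF d1] L1 assms by simp
  have len2: "length L2 = b" using distinct_card[OF d2] L2 assms(1,2) card_Diff_subset[OF finS assms(1)] by simp
  define L where "L = L1 @ L2"
  have dL: "distinct L" unfolding L_def distinct_append using d1 d2 L1(2) L2(2) by blast
  have setL: "set L = {..<a+b}" unfolding L_def set_append L1(2) L2(2) using assms(1) by blast
  have lenL: "length L = a + b" unfolding L_def using len1 len2 by simp
  define \<sigma> where "\<sigma> x = (if x < a + b then L ! x else x)" for x
  have perm: "\<sigma> permutes {..<a+b}"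
  proof (rule inj_imp_permutes)
    show "inj_on \<sigma> {..<a+b}"
    proof (rule inj_onI)
      fix x y assume xy: "x \<in> {..<a+b}" "y \<in> {..<a+b}" "\<sigma> x = \<sigma> y"
      then have "L ! x = L ! y" by (simp add: \<sigma>_def)
      then show "x = y" using xy dL lenL by (simp add: nth_eq_iff_index_eq)
    qed
    show "\<sigma> x \<in> {..<a+b}" if "x \<in> {..<a+b}" for x
      using that setL lenL unfolding \<sigma>_def by (metis lessThan_iff nth_mem)
  qed (simp_all add: \<sigma>_def)
  have s1: "\<sigma> x = L1 ! x" if "x < a" for x using that len1 by (simp add: \<sigma>_def L_def nth_append)
  have s2: "\<sigma> x = L2 ! (x - a)" if "a \<le> x" "x < a + b" for x using that len1 by (simp add: \<sigma>_def L_def nth_append)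
  have sh: "\<sigma> \<in> shuffles a b"
    unfolding shuffles_def
  proof (intro CollectI conjI allI impI perm)
    fix x y assume "x < y \<and> y < a" then show "\<sigma> x < \<sigma> y"
      using s1 L1(1) len1 by (simp add: sorted_wrt_iff_nth_less)
  next
    fix x y assume h: "a \<le> x \<and> x < y \<and> y < a + b"
    have "\<sigma> x = L2!(x-a)" "\<sigma> y = L2!(y-a)" using s2 h by auto
    moreover have "x - a < y - a" "y - a < b" using h by arith+
    ultimately show "\<sigma> x < \<sigma> y" using L2(1) len2 by (simp add: sorted_wrt_iff_nth_less)
  qed
  have "\<sigma> ` {..<a} = S"
  proof -
    have "\<sigma> ` {..<a} = (\<lambda>x. L1 ! x) ` {..<a}" using s1 by auto
    also have "\<dots> = set L1" unfolding set_conv_nth using len1 by auto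
    finally show ?thesis using L1 by simp
  qed
  then show ?thesis using sh by blast
qed

lemma shuffle_bij:
  "bij_betw (\<lambda>\<sigma>. \<sigma> ` {..<a}) (shuffles a b) {S. S \<subseteq> {..<a+b} \<and> card S = a}"
  unfolding bij_betw_def
proof (intro conjI)
  show "inj_on (\<lambda>\<sigma>. \<sigma> ` {..<a}) (shuffles a b)" by (rule inj_onI) (rule shuffle_unique)
  show "(\<lambda>\<sigma>. \<sigma> ` {..<a}) ` shuffles a b = {S. S \<subseteq> {..<a+b} \<and> card S = a}"
  proof (intro set_eqI iffI)
    fix S assume "S \<in> (\<lambda>\<sigma>. \<sigma> ` {..<a}) ` shuffles a b"
    then obtain \<sigma> where s: "\<sigma> \<in> shuffles a b" "S = \<sigma> ` {..<a}" by blast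
    note D = shufflesD[OF s(1)]
    have inj: "inj_on \<sigma> {..<a+b}" using D(1) permutes_inj_on by blast
    have "card S = a" using inj s(2) by (simp add: card_image inj_on_subset[of _ "{..<a+b}"])
    moreover have "S \<subseteq> {..<a+b}" using shuffle_lists(5)[OF s(1)] s(2) by simp
    ultimately show "S \<in> {S. S \<subseteq> {..<a+b} \<and> card S = a}" by simp
  next
    fix S assume "S \<in> {S. S \<subseteq> {..<a+b} \<and> card S = a}"
    then have "S \<subseteq> {..<a+b}" "card S = a" by simp_all
    then obtain \<sigma> where "\<sigma> \<in> shuffles a b" "\<sigma> ` {..<a} = S" using shuffle_exists by blast
    then show "S \<in> (\<lambda>\<sigma>. \<sigma> ` {..<a}) ` shuffles a b" by (metis image_eqI)
  qed
qed

definition sg :: "nat set \<Rightarrow> 'r::comm_ring_1" where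
  "sg S = (-1) ^ (\<Sum>S + \<Sum>{..<card S})"

definition PP :: "nat \<Rightarrow> (nat \<Rightarrow> 'e list \<Rightarrow> 'a list \<Rightarrow> 'r::comm_ring_1) \<Rightarrow> (nat \<Rightarrow> 'e list \<Rightarrow> 'a list \<Rightarrow> 'r)
   \<Rightarrow> 'e list \<Rightarrow> 'a list \<Rightarrow> 'r" where
  "PP p W H es fs = (\<Sum>S\<in>Pow {..<length es}. \<Sum>T\<in>Pow {..<length fs}.
     if card S + 2 * card T = p then sg S * W (card T) (nths es S) (nths fs T) * H (length fs - card T) (nths es (-S)) (nths fs (-T)) else 0)"

lemma shuffle_card:
  assumes "\<sigma> \<in> shuffles a b" shows "card (\<sigma> ` {..<a}) = a"
proof -
  have "\<sigma> ` {..<a} \<in> {S. S \<subseteq> {..<a+b} \<and> card S = a}"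
    using bij_betw_apply[OF shuffle_bij assms] .
  then show ?thesis by simp
qed

lemma shuffle_sum:
  fixes G :: "nat set \<Rightarrow> 'r::comm_monoid_add"
  shows "(\<Sum>\<sigma>\<in>shuffles a b. G (\<sigma> ` {..<a})) = (\<Sum>S\<in>{S. S \<subseteq> {..<a+b} \<and> card S = a}. G S)"
  by (rule sum.reindex_bij_betw[OF shuffle_bij])

lemma cprod_inner:
  fixes W H :: "nat \<Rightarrow> 'e list \<Rightarrow> 'a list \<Rightarrow> 'r::comm_ring_1"
  assumes "length es = a + b" "length \<alpha>s = i + j"
  shows "(\<Sum>\<sigma>\<in>shuffles a b. \<Sum>\<tau>\<in>shuffles i j.
        of_int (sign \<sigma>) * W i (map (\<lambda>l. es ! \<sigma> l) [0..<a]) (map (\<lambda>l. \<alpha>s ! \<tau> l) [0..<i])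
               * H j (map (\<lambda>l. es ! \<sigma> l) [a..<a+b]) (map (\<lambda>l. \<alpha>s ! \<tau> l) [i..<i+j]))
     = (\<Sum>S\<in>{S. S \<subseteq> {..<a+b} \<and> card S = a}. \<Sum>T\<in>{T. T \<subseteq> {..<i+j} \<and> card T = i}.
        sg S * W i (nths es S) (nths \<alpha>s T) * H j (nths es (-S)) (nths \<alpha>s (-T)))"
proof -
  have "(\<Sum>\<sigma>\<in>shuffles a b. \<Sum>\<tau>\<in>shuffles i j.
        of_int (sign \<sigma>) * W i (map (\<lambda>l. es ! \<sigma> l) [0..<a]) (map (\<lambda>l. \<alpha>s ! \<tau> l) [0..<i])
               * H j (map (\<lambda>l. es ! \<sigma> l) [a..<a+b]) (map (\<lambda>l. \<alpha>s ! \<tau> l) [i..<i+j]))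
     = (\<Sum>\<sigma>\<in>shuffles a b. \<Sum>\<tau>\<in>shuffles i j.
        sg (\<sigma> ` {..<a}) * W i (nths es (\<sigma> ` {..<a})) (nths \<alpha>s (\<tau> ` {..<i})) * H j (nths es (-(\<sigma> ` {..<a}))) (nths \<alpha>s (-(\<tau> ` {..<i}))))"
  proof (intro sum.cong refl)
    fix \<sigma> \<tau> assume s: "\<sigma> \<in> shuffles a b" and t: "\<tau> \<in> shuffles i j"
    have "(of_int (sign \<sigma>) :: 'r) = sg (\<sigma> ` {..<a})"
      unfolding shuffle_sign[OF s] sg_def shuffle_card[OF s] by simp
    then show "of_int (sign \<sigma>) * W i (map (\<lambda>l. es ! \<sigma> l) [0..<a]) (map (\<lambda>l. \<alpha>s ! \<tau> l) [0..<i])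
               * H j (map (\<lambda>l. es ! \<sigma> l) [a..<a+b]) (map (\<lambda>l. \<alpha>s ! \<tau> l) [i..<i+j]) =
        sg (\<sigma> ` {..<a}) * W i (nths es (\<sigma> ` {..<a})) (nths \<alpha>s (\<tau> ` {..<i})) * H j (nths es (-(\<sigma> ` {..<a}))) (nths \<alpha>s (-(\<tau> ` {..<i})))"
      using shuffle_W[OF s assms(1)] shuffle_H[OF s assms(1)] shuffle_W[OF t assms(2)] shuffle_H[OF t assms(2)]
      by simp
  qed
  also have "\<dots> = (\<Sum>S\<in>{S. S \<subseteq> {..<a+b} \<and> card S = a}. \<Sum>\<tau>\<in>shuffles i j.
        sg S * W i (nths es S) (nths \<alpha>s (\<tau> ` {..<i})) * H j (nths es (-S)) (nths \<alpha>s (-(\<tau> ` {..<i}))))"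
    by (rule shuffle_sum[where G="\<lambda>S. \<Sum>\<tau>\<in>shuffles i j.
        sg S * W i (nths es S) (nths \<alpha>s (\<tau> ` {..<i})) * H j (nths es (-S)) (nths \<alpha>s (-(\<tau> ` {..<i})))"])
  also have "\<dots> = (\<Sum>S\<in>{S. S \<subseteq> {..<a+b} \<and> card S = a}. \<Sum>T\<in>{T. T \<subseteq> {..<i+j} \<and> card T = i}.
        sg S * W i (nths es S) (nths \<alpha>s T) * H j (nths es (-S)) (nths \<alpha>s (-T)))"
    by (intro sum.cong refl shuffle_sum)
  finally show ?thesis .
qed


lemma card_sub_le: "S \<subseteq> {..<m} \<Longrightarrow> card S \<le> m"
  by (metis card_lessThan card_mono finite_lessThan)

lemma cprod_PP:
  fixes W H :: "nat \<Rightarrow> 'e list \<Rightarrow> 'a list \<Rightarrow> 'r::comm_ring_1"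
  assumes len: "length es + 2 * k = p + q" "length \<alpha>s = k"
  shows "cprod p W q H k es \<alpha>s = PP p W H es \<alpha>s"
proof -
  define m where "m = length es"
  define I where "I = {i. i \<le> k \<and> i \<le> p div 2 \<and> k - i \<le> q div 2}"
  define F where "F i S T = sg S * W i (nths es S) (nths \<alpha>s T) * H (k - i) (nths es (-S)) (nths \<alpha>s (-T))" for i S T
  have step1: "cprod p W q H k es \<alpha>s = (\<Sum>i\<in>I. \<Sum>S\<in>{S. S \<subseteq> {..<m} \<and> card S = p - 2*i}. \<Sum>T\<in>{T. T \<subseteq> {..<k} \<and> card T = i}. F i S T)"
    unfolding cprod_def I_def[symmetric]
  proof (rule sum.cong[OF refl])
    fix i assume i: "i \<in> I"
    then have i1: "i \<le> k" "2 * i \<le> p" "2 * (k - i) \<le> q" unfolding I_def by auto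
    define a where "a = p - 2 * i"
    define b where "b = q - 2 * (k - i)"
    have ab: "m = a + b" "p + q - 2 * k = a + b" using i1 len unfolding a_def b_def m_def by auto
    have ij: "length \<alpha>s = i + (k - i)" "k = i + (k - i)" using i1 len by auto
    have "(\<Sum>\<sigma>\<in>shuffles (p - 2 * i) (q - 2 * (k - i)). \<Sum>\<tau>\<in>shuffles i (k - i).
        of_int (sign \<sigma>) * W i (map (\<lambda>l. es ! \<sigma> l) [0..<p - 2 * i]) (map (\<lambda>l. \<alpha>s ! \<tau> l) [0..<i])
               * H (k - i) (map (\<lambda>l. es ! \<sigma> l) [p - 2 * i..<p + q - 2 * k]) (map (\<lambda>l. \<alpha>s ! \<tau> l) [i..<k]))
      = (\<Sum>\<sigma>\<in>shuffles a b. \<Sum>\<tau>\<in>shuffles i (k - i).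
        of_int (sign \<sigma>) * W i (map (\<lambda>l. es ! \<sigma> l) [0..<a]) (map (\<lambda>l. \<alpha>s ! \<tau> l) [0..<i])
               * H (k - i) (map (\<lambda>l. es ! \<sigma> l) [a..<a+b]) (map (\<lambda>l. \<alpha>s ! \<tau> l) [i..<i + (k - i)]))"
      unfolding a_def[symmetric] b_def[symmetric] ab(2) ij(2)[symmetric] by simp
    also have "\<dots> = (\<Sum>S\<in>{S. S \<subseteq> {..<a+b} \<and> card S = a}. \<Sum>T\<in>{T. T \<subseteq> {..<i+(k-i)} \<and> card T = i}.
        sg S * W i (nths es S) (nths \<alpha>s T) * H (k - i) (nths es (-S)) (nths \<alpha>s (-T)))"
      by (rule cprod_inner) (use ab ij m_def in auto)
    also have "\<dots> = (\<Sum>S\<in>{S. S \<subseteq> {..<m} \<and> card S = p - 2*i}. \<Sum>T\<in>{T. T \<subseteq> {..<k} \<and> card T = i}. F i S T)"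
      unfolding F_def ab(1) a_def[symmetric] ij(2)[symmetric] ..
    finally show "(\<Sum>\<sigma>\<in>shuffles (p - 2 * i) (q - 2 * (k - i)). \<Sum>\<tau>\<in>shuffles i (k - i).
        of_int (sign \<sigma>) * W i (map (\<lambda>l. es ! \<sigma> l) [0..<p - 2 * i]) (map (\<lambda>l. \<alpha>s ! \<tau> l) [0..<i])
               * H (k - i) (map (\<lambda>l. es ! \<sigma> l) [p - 2 * i..<p + q - 2 * k]) (map (\<lambda>l. \<alpha>s ! \<tau> l) [i..<k]))
      = (\<Sum>S\<in>{S. S \<subseteq> {..<m} \<and> card S = p - 2*i}. \<Sum>T\<in>{T. T \<subseteq> {..<k} \<and> card T = i}. F i S T)" .
  qed
  define G where "G S T = (if card S + 2 * card T = p then F (card T) S T else 0)" for S T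
  have "PP p W H es \<alpha>s = (\<Sum>S\<in>Pow {..<m}. \<Sum>T\<in>Pow {..<k}. G S T)"
    unfolding PP_def G_def F_def m_def len(2) by simp
  also have "\<dots> = (\<Sum>T\<in>Pow {..<k}. \<Sum>S\<in>Pow {..<m}. G S T)" by (rule sum.swap)
  also have "\<dots> = (\<Sum>i\<in>{..k}. \<Sum>T\<in>{T\<in>Pow {..<k}. card T = i}. \<Sum>S\<in>Pow {..<m}. G S T)"
  proof (rule sum.group[symmetric])
    show "card ` Pow {..<k} \<subseteq> {..k}" using card_sub_le by auto
  qed auto
  also have "\<dots> = (\<Sum>i\<in>{..k}. if 2 * i \<le> p then (\<Sum>T\<in>{T. T \<subseteq> {..<k} \<and> card T = i}.
        \<Sum>S\<in>{S. S \<subseteq> {..<m} \<and> card S = p - 2*i}. F i S T) else 0)"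
  proof (rule sum.cong[OF refl])
    fix i assume "i \<in> {..k}"
    have e1: "{T\<in>Pow {..<k}. card T = i} = {T. T \<subseteq> {..<k} \<and> card T = i}" by auto
    have e2: "(\<Sum>S\<in>Pow {..<m}. G S T) = (if 2 * i \<le> p then \<Sum>S\<in>{S. S \<subseteq> {..<m} \<and> card S = p - 2*i}. F i S T else 0)"
      if "card T = i" for T
    proof -
      have "(\<Sum>S\<in>Pow {..<m}. G S T) = (\<Sum>S\<in>Pow {..<m}. if card S = p - 2 * i \<and> 2 * i \<le> p then F i S T else 0)"
        by (rule sum.cong[OF refl]) (auto simp: G_def that)
      also have "\<dots> = (\<Sum>S\<in>{S\<in>Pow {..<m}. card S = p - 2 * i \<and> 2 * i \<le> p}. F i S T)"
        by (rule sum.inter_filter[symmetric]) simp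
      also have "\<dots> = (if 2 * i \<le> p then \<Sum>S\<in>{S. S \<subseteq> {..<m} \<and> card S = p - 2*i}. F i S T else 0)"
        by auto
      finally show ?thesis .
    qed
    show "(\<Sum>T\<in>{T\<in>Pow {..<k}. card T = i}. \<Sum>S\<in>Pow {..<m}. G S T) = (if 2 * i \<le> p then (\<Sum>T\<in>{T. T \<subseteq> {..<k} \<and> card T = i}.
        \<Sum>S\<in>{S. S \<subseteq> {..<m} \<and> card S = p - 2*i}. F i S T) else 0)"
    proof (cases "2 * i \<le> p")
      case True
      then have "(\<Sum>T\<in>{T. T \<subseteq> {..<k} \<and> card T = i}. \<Sum>S\<in>Pow {..<m}. G S T) = (\<Sum>T\<in>{T. T \<subseteq> {..<k} \<and> card T = i}.
        \<Sum>S\<in>{S. S \<subseteq> {..<m} \<and> card S = p - 2*i}. F i S T)"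
        using e2 True by (intro sum.cong[OF refl]) simp
      then show ?thesis unfolding e1 using True by simp
    next
      case False
      then have "(\<Sum>T\<in>{T. T \<subseteq> {..<k} \<and> card T = i}. \<Sum>S\<in>Pow {..<m}. G S T) = (\<Sum>T\<in>{T. T \<subseteq> {..<k} \<and> card T = i}. 0)"
        using e2 False by (intro sum.cong[OF refl]) simp
      then show ?thesis unfolding e1 using False by simp
    qed
  qed
  also have "\<dots> = (\<Sum>i\<in>I. \<Sum>T\<in>{T. T \<subseteq> {..<k} \<and> card T = i}.
        \<Sum>S\<in>{S. S \<subseteq> {..<m} \<and> card S = p - 2*i}. F i S T)"
  proof (rule sum.mono_neutral_cong_right)
    show "I \<subseteq> {..k}" unfolding I_def by auto
    show "\<forall>i\<in>{..k} - I. (if 2 * i \<le> p then (\<Sum>T\<in>{T. T \<subseteq> {..<k} \<and> card T = i}.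
        \<Sum>S\<in>{S. S \<subseteq> {..<m} \<and> card S = p - 2*i}. F i S T) else 0) = 0"
    proof
      fix i assume i: "i \<in> {..k} - I"
      show "(if 2 * i \<le> p then (\<Sum>T\<in>{T. T \<subseteq> {..<k} \<and> card T = i}.
        \<Sum>S\<in>{S. S \<subseteq> {..<m} \<and> card S = p - 2*i}. F i S T) else 0) = 0"
      proof (cases "2 * i \<le> p")
        case True
        then have "\<not> (k - i \<le> q div 2)" using i unfolding I_def by auto
        then have "p - 2 * i > m" using True len unfolding m_def by linarith
        then have "card S \<noteq> p - 2*i" if "S \<subseteq> {..<m}" for S using card_sub_le[OF that] by linarith
        then have E: "{S. S \<subseteq> {..<m} \<and> card S = p - 2*i} = {}" by blast
        show ?thesis unfolding E using True by simp
      qed simp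
    qed
    show "\<And>i. i \<in> I \<Longrightarrow> (if 2 * i \<le> p then (\<Sum>T\<in>{T. T \<subseteq> {..<k} \<and> card T = i}.
        \<Sum>S\<in>{S. S \<subseteq> {..<m} \<and> card S = p - 2*i}. F i S T) else 0) = (\<Sum>T\<in>{T. T \<subseteq> {..<k} \<and> card T = i}.
        \<Sum>S\<in>{S. S \<subseteq> {..<m} \<and> card S = p - 2*i}. F i S T)"
      unfolding I_def by auto
  qed simp
  also have "\<dots> = (\<Sum>i\<in>I. \<Sum>S\<in>{S. S \<subseteq> {..<m} \<and> card S = p - 2*i}. \<Sum>T\<in>{T. T \<subseteq> {..<k} \<and> card T = i}. F i S T)"
    by (rule sum.cong[OF refl]) (rule sum.swap)
  finally show ?thesis using step1 by simp
qed

definition shift :: "nat \<Rightarrow> nat set \<Rightarrow> nat set" where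
  "shift i S = (\<lambda>s. if s < i then s else Suc s) ` S"

definition ins :: "nat \<Rightarrow> nat set \<Rightarrow> nat set" where
  "ins i S = insert i (shift i S)"

definition rank :: "nat set \<Rightarrow> nat \<Rightarrow> nat" where
  "rank A i = card {s\<in>A. s < i}"

lemma mem_shift: "x \<in> shift i S \<longleftrightarrow> (x < i \<and> x \<in> S) \<or> (i < x \<and> x - 1 \<in> S)"
proof
  assume "x \<in> shift i S"
  then obtain s where s: "s \<in> S" "x = (if s < i then s else Suc s)" unfolding shift_def by blast
  then show "(x < i \<and> x \<in> S) \<or> (i < x \<and> x - 1 \<in> S)" by (cases "s < i") auto
next
  assume h: "(x < i \<and> x \<in> S) \<or> (i < x \<and> x - 1 \<in> S)"
  show "x \<in> shift i S"
  proof (cases "x < i")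
    case True
    then have "x \<in> S" using h by simp
    then show ?thesis unfolding shift_def using True by (intro image_eqI[where x=x]) auto
  next
    case False
    then have "i < x" "x - 1 \<in> S" using h by auto
    then show ?thesis unfolding shift_def by (intro image_eqI[where x="x - 1"]) auto
  qed
qed

lemma mem_ins: "x \<in> ins i S \<longleftrightarrow> x = i \<or> (x < i \<and> x \<in> S) \<or> (i < x \<and> x - 1 \<in> S)"
  unfolding ins_def using mem_shift by auto

lemma notin_shift: "i \<notin> shift i S" by (simp add: mem_shift)

lemma shift_compl: "shift i (-S) = - ins i S"
  by (auto simp: mem_shift mem_ins)

lemma compl_shift: "- shift i S = ins i (-S)"
  by (auto simp: mem_shift mem_ins)

lemma ins_minus: "ins i S - {i} = shift i S"
  using notin_shift unfolding ins_def by auto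

lemma inj_shift_fun: "inj (\<lambda>s::nat. if s < i then s else Suc s)"
  by (rule injI) (auto split: if_splits)

lemma card_shift: "card (shift i S) = card S"
  unfolding shift_def by (rule card_image) (rule inj_on_subset[OF inj_shift_fun], simp)

lemma finite_shift: "finite (shift i S) \<longleftrightarrow> finite S"
  unfolding shift_def using finite_image_iff inj_on_subset[OF inj_shift_fun] by blast

lemma card_ins: "finite S \<Longrightarrow> card (ins i S) = Suc (card S)"
  unfolding ins_def by (simp add: notin_shift card_shift finite_shift)

lemma shift_sub: "S \<subseteq> {..<m} \<Longrightarrow> shift i S \<subseteq> {..<Suc m}"
proof
  fix x assume S: "S \<subseteq> {..<m}" and "x \<in> shift i S"
  then consider "x \<in> S" | "x - 1 \<in> S" "0 < x" unfolding mem_shift by auto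
  then show "x \<in> {..<Suc m}" using S by cases auto
qed

lemma ins_sub: "i \<le> m \<Longrightarrow> S \<subseteq> {..<m} \<Longrightarrow> ins i S \<subseteq> {..<Suc m}"
  unfolding ins_def using shift_sub by auto

definition unshift :: "nat \<Rightarrow> nat set \<Rightarrow> nat set" where
  "unshift i A = (\<lambda>x. if x < i then x else x - 1) ` (A - {i})"

lemma shift_unshift: "shift i (unshift i A) = A - {i}"
proof (intro set_eqI)
  fix x
  show "x \<in> shift i (unshift i A) \<longleftrightarrow> x \<in> A - {i}"
  proof
    assume "x \<in> shift i (unshift i A)"
    then obtain y z where "z \<in> A - {i}" "y = (if z < i then z else z - 1)" "x = (if y < i then y else Suc y)"
      unfolding shift_def unshift_def by blast
    then show "x \<in> A - {i}" by (auto split: if_splits)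
  next
    assume x: "x \<in> A - {i}"
    define y where "y = (if x < i then x else x - 1)"
    have "y \<in> unshift i A" unfolding unshift_def y_def using x by blast
    moreover have "x = (if y < i then y else Suc y)" using x unfolding y_def by auto
    ultimately show "x \<in> shift i (unshift i A)" unfolding shift_def by blast
  qed
qed

lemma unshift_sub: "A \<subseteq> {..<Suc m} \<Longrightarrow> i \<le> m \<Longrightarrow> unshift i A \<subseteq> {..<m}"
  unfolding unshift_def by auto

lemma shift_inj: "shift i S = shift i T \<Longrightarrow> S = T"
  unfolding shift_def using inj_image_eq_iff[OF inj_shift_fun] by blast

lemma sum_ins:
  fixes F :: "nat set \<Rightarrow> 'r::comm_monoid_add"
  assumes "i \<le> m"
  shows "(\<Sum>S\<in>Pow {..<m}. F (ins i S)) = (\<Sum>S\<in>Pow {..<Suc m}. if i \<in> S then F S else 0)"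
proof -
  have bij: "bij_betw (ins i) (Pow {..<m}) {S\<in>Pow {..<Suc m}. i \<in> S}"
  proof (rule bij_betw_imageI)
    show "inj_on (ins i) (Pow {..<m})"
    proof (rule inj_onI)
      fix S T assume "ins i S = ins i T"
      then have "ins i S - {i} = ins i T - {i}" by simp
      then show "S = T" unfolding ins_minus by (rule shift_inj)
    qed
    show "ins i ` Pow {..<m} = {S\<in>Pow {..<Suc m}. i \<in> S}"
    proof (intro set_eqI iffI)
      fix A assume "A \<in> ins i ` Pow {..<m}"
      then show "A \<in> {S\<in>Pow {..<Suc m}. i \<in> S}" using ins_sub[OF assms] by (auto simp: ins_def)
    next
      fix A assume A: "A \<in> {S\<in>Pow {..<Suc m}. i \<in> S}"
      have "ins i (unshift i A) = A" unfolding ins_def shift_unshift using A by auto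
      moreover have "unshift i A \<in> Pow {..<m}" using unshift_sub[OF _ assms] A by auto
      ultimately show "A \<in> ins i ` Pow {..<m}" by (metis image_eqI)
    qed
  qed
  have "(\<Sum>S\<in>Pow {..<m}. F (ins i S)) = (\<Sum>S\<in>{S\<in>Pow {..<Suc m}. i \<in> S}. F S)"
    by (rule sum.reindex_bij_betw[OF bij])
  also have "\<dots> = (\<Sum>S\<in>Pow {..<Suc m}. if i \<in> S then F S else 0)"
    by (rule sum.inter_filter) simp
  finally show ?thesis .
qed

lemma sum_shift:
  fixes F :: "nat set \<Rightarrow> 'r::comm_monoid_add"
  assumes "i \<le> m"
  shows "(\<Sum>S\<in>Pow {..<m}. F (shift i S)) = (\<Sum>S\<in>Pow {..<Suc m}. if i \<notin> S then F S else 0)"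
proof -
  have bij: "bij_betw (shift i) (Pow {..<m}) {S\<in>Pow {..<Suc m}. i \<notin> S}"
  proof (rule bij_betw_imageI)
    show "inj_on (shift i) (Pow {..<m})" by (rule inj_onI) (rule shift_inj)
    show "shift i ` Pow {..<m} = {S\<in>Pow {..<Suc m}. i \<notin> S}"
    proof (intro set_eqI iffI)
      fix A assume "A \<in> shift i ` Pow {..<m}"
      then show "A \<in> {S\<in>Pow {..<Suc m}. i \<notin> S}" using shift_sub notin_shift by auto
    next
      fix A assume A: "A \<in> {S\<in>Pow {..<Suc m}. i \<notin> S}"
      have "shift i (unshift i A) = A" unfolding shift_unshift using A by auto
      moreover have "unshift i A \<in> Pow {..<m}" using unshift_sub[OF _ assms] A by auto
      ultimately show "A \<in> shift i ` Pow {..<m}" by (metis image_eqI)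
    qed
  qed
  have "(\<Sum>S\<in>Pow {..<m}. F (shift i S)) = (\<Sum>S\<in>{S\<in>Pow {..<Suc m}. i \<notin> S}. F S)"
    by (rule sum.reindex_bij_betw[OF bij])
  also have "\<dots> = (\<Sum>S\<in>Pow {..<Suc m}. if i \<notin> S then F S else 0)"
    by (rule sum.inter_filter) simp
  finally show ?thesis .
qed

lemma nths_del:
  assumes "i < length xs"
  shows "nths (del i xs) S = nths xs (shift i S)"
proof -
  have "nths (del i xs) S = nths (take i xs) S @ nths (drop (Suc i) xs) {j. j + i \<in> S}"
    unfolding del_def using assms by (simp add: nths_append min_def)
  moreover have "nths xs (shift i S) = nths (take i xs) (shift i S) @ nths (drop (Suc i) xs) {j. j + Suc i \<in> shift i S}"
    using nths_split[OF assms, of "shift i S"] by (simp add: notin_shift)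
  moreover have "nths (take i xs) (shift i S) = nths (take i xs) S"
    by (rule nths_cong_len) (auto simp: mem_shift)
  moreover have "{j. j + Suc i \<in> shift i S} = {j. j + i \<in> S}"
    by (auto simp: mem_shift)
  ultimately show ?thesis by simp
qed

lemma length_nths_take: "i \<le> length xs \<Longrightarrow> length (nths (take i xs) A) = rank A i"
  unfolding rank_def length_nths by (rule arg_cong[where f=card]) auto

lemma nths_rank:
  assumes "i \<in> A" "i < length xs"
  shows "rank A i < length (nths xs A)" "nths xs A ! rank A i = xs ! i"
    "del (rank A i) (nths xs A) = nths xs (A - {i})"
proof -
  define P where "P = nths (take i xs) A"
  define Q where "Q = nths (drop (Suc i) xs) {j. j + Suc i \<in> A}"
  have L: "nths xs A = P @ [xs ! i] @ Q" unfolding P_def Q_def using nths_split[OF assms(2)] assms(1) by simp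
  have lP: "length P = rank A i" unfolding P_def using assms(2) by (simp add: length_nths_take)
  show "rank A i < length (nths xs A)" using L lP by simp
  show "nths xs A ! rank A i = xs ! i" using L lP by (simp add: nth_append)
  have "nths xs (A - {i}) = nths (take i (xs)) (A - {i}) @ nths (drop (Suc i) xs) {j. j + Suc i \<in> A - {i}}"
    using nths_split[OF assms(2), of "A - {i}"] by simp
  moreover have "nths (take i (xs)) (A - {i}) = P" unfolding P_def by (rule nths_cong_len) auto
  moreover have "{j. j + Suc i \<in> A - {i}} = {j. j + Suc i \<in> A}" by auto
  ultimately have "nths xs (A - {i}) = P @ Q" unfolding Q_def by simp
  then show "del (rank A i) (nths xs A) = nths xs (A - {i})"
    unfolding del_def L using lP by simp
qed

lemma nths_upd_in:
  assumes "j \<in> A" "j < length xs"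
  shows "nths (xs[j := v]) A = (nths xs A)[rank A j := v]"
proof -
  have l2: "j < length (xs[j := v])" using assms by simp
  have "nths (xs[j := v]) A = nths (take j xs) A @ [v] @ nths (drop (Suc j) xs) {k. k + Suc j \<in> A}"
    using nths_split[OF l2, of A] assms by simp
  moreover have "nths xs A = nths (take j xs) A @ [xs ! j] @ nths (drop (Suc j) xs) {k. k + Suc j \<in> A}"
    using nths_split[OF assms(2), of A] assms by simp
  moreover have "length (nths (take j xs) A) = rank A j" using assms by (simp add: length_nths_take)
  ultimately show ?thesis by (simp add: list_update_append)
qed

lemma nths_upd_notin:
  assumes "j \<notin> A"
  shows "nths (xs[j := v]) A = nths xs A"
proof (cases "j < length xs")
  case True
  have l2: "j < length (xs[j := v])" using True by simp
  have "nths (xs[j := v]) A = nths (take j xs) A @ nths (drop (Suc j) xs) {k. k + Suc j \<in> A}"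
    using nths_split[OF l2, of A] assms by simp
  moreover have "nths xs A = nths (take j xs) A @ nths (drop (Suc j) xs) {k. k + Suc j \<in> A}"
    using nths_split[OF True, of A] assms by simp
  ultimately show ?thesis by simp
next
  case False then show ?thesis by (simp add: list_update_beyond)
qed

lemma length_nths_sub: "A \<subseteq> {..<length xs} \<Longrightarrow> length (nths xs A) = card A"
  unfolding length_nths by (rule arg_cong[where f=card]) auto

lemma rank_mono:
  assumes "finite A" "i \<in> A" "i < j" shows "rank A i < rank A j"
  unfolding rank_def by (rule psubset_card_mono) (use assms in auto)

lemma rank_lt: assumes "finite A" "i \<in> A" shows "rank A i < card A"
  unfolding rank_def by (rule psubset_card_mono) (use assms in auto)

lemma rank_bij: assumes "finite A" shows "bij_betw (rank A) A {..<card A}"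
proof -
  have inj: "inj_on (rank A) A"
  proof (rule inj_onI)
    fix x y assume "x \<in> A" "y \<in> A" "rank A x = rank A y"
    then show "x = y" using rank_mono[OF assms] by (metis less_irrefl nat_neq_iff)
  qed
  have sub: "rank A ` A \<subseteq> {..<card A}" using rank_lt[OF assms] by auto
  have "card (rank A ` A) = card {..<card A}" using card_image[OF inj] by simp
  then have "rank A ` A = {..<card A}" using sub by (simp add: card_subset_eq)
  then show ?thesis using inj by (simp add: bij_betw_def)
qed

lemma sum_rank:
  fixes g :: "nat \<Rightarrow> 'r::comm_monoid_add"
  assumes "finite A"
  shows "(\<Sum>a<card A. g a) = (\<Sum>i\<in>A. g (rank A i))"
  by (rule sum.reindex_bij_betw[OF rank_bij[OF assms], symmetric])

lemma rank_restrict: "i < j \<Longrightarrow> rank {s\<in>A. s < j} i = rank A i"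
  unfolding rank_def by (rule arg_cong[where f=card]) auto

lemma sum_rank2:
  fixes g :: "nat \<Rightarrow> nat \<Rightarrow> 'r::comm_monoid_add"
  assumes "finite A"
  shows "(\<Sum>b<card A. \<Sum>a<b. g a b) = (\<Sum>j\<in>A. \<Sum>i\<in>{s\<in>A. s < j}. g (rank A i) (rank A j))"
proof -
  have "(\<Sum>b<card A. \<Sum>a<b. g a b) = (\<Sum>j\<in>A. \<Sum>a<rank A j. g a (rank A j))"
    by (rule sum_rank[OF assms])
  also have "\<dots> = (\<Sum>j\<in>A. \<Sum>i\<in>{s\<in>A. s < j}. g (rank A i) (rank A j))"
  proof (rule sum.cong[OF refl])
    fix j assume "j \<in> A"
    have f: "finite {s\<in>A. s < j}" using assms by simp
    have "(\<Sum>a<rank A j. g a (rank A j)) = (\<Sum>a<card {s\<in>A. s < j}. g a (rank A j))"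
      unfolding rank_def ..
    also have "\<dots> = (\<Sum>i\<in>{s\<in>A. s < j}. g (rank {s\<in>A. s < j} i) (rank A j))"
      by (rule sum_rank[OF f])
    also have "\<dots> = (\<Sum>i\<in>{s\<in>A. s < j}. g (rank A i) (rank A j))"
      by (rule sum.cong[OF refl]) (simp add: rank_restrict)
    finally show "(\<Sum>a<rank A j. g a (rank A j)) = (\<Sum>i\<in>{s\<in>A. s < j}. g (rank A i) (rank A j))" .
  qed
  finally show ?thesis .
qed

lemma neg1_eq: "even (x + y) \<Longrightarrow> ((-1::'r::comm_ring_1) ^ x) = (-1) ^ y"
  by (simp add: minus_one_power_iff)

lemma sum_shift_set:
  assumes "finite S"
  shows "\<Sum>(shift i S) = \<Sum>S + card {s\<in>S. i \<le> s}"
proof -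
  have "\<Sum>(shift i S) = (\<Sum>s\<in>S. if s < i then s else Suc s)"
    unfolding shift_def by (subst sum.reindex[OF inj_on_subset[OF inj_shift_fun subset_UNIV]]) simp
  also have "\<dots> = (\<Sum>s\<in>S. s + (if i \<le> s then 1 else 0))" by (rule sum.cong) auto
  also have "\<dots> = \<Sum>S + (\<Sum>s\<in>S. if i \<le> s then 1 else 0)" by (simp add: sum.distrib)
  also have "(\<Sum>s\<in>S. if i \<le> s then 1 else (0::nat)) = card {s\<in>S. i \<le> s}"
    using assms by (simp add: sum.If_cases Int_def conj_commute)
  finally show ?thesis .
qed

lemma card_split: fixes S :: "nat set" assumes "finite S" shows "card S = card {s\<in>S. s < i} + card {s\<in>S. i \<le> s}"
proof -
  have "card S = card ({s\<in>S. s < i} \<union> {s\<in>S. i \<le> s})" by (rule arg_cong[where f=card]) auto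
  also have "\<dots> = card {s\<in>S. s < i} + card {s\<in>S. i \<le> s}" by (rule card_Un_disjoint) (use assms in auto)
  finally show ?thesis .
qed

lemma sg_shift:
  assumes "finite S"
  shows "sg (shift i S) = ((-1::'r::comm_ring_1) ^ card {s\<in>S. i \<le> s}) * sg S"
  unfolding sg_def card_shift sum_shift_set[OF assms] by (simp add: power_add)

lemma rank_ins: "rank (ins i S) i = rank S i"
  unfolding rank_def by (rule arg_cong[where f=card]) (auto simp: mem_ins)

lemma sg_ins:
  assumes "finite S"
  shows "sg (ins i S) * (-1) ^ rank (ins i S) i = ((-1::'r::comm_ring_1) ^ i) * sg S"
proof -
  have s: "\<Sum>(ins i S) = i + \<Sum>S + card {s\<in>S. i \<le> s}"
    unfolding ins_def using assms sum_shift_set[OF assms] by (simp add: notin_shift finite_shift)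
  have c: "card (ins i S) = Suc (card S)" using card_ins[OF assms] .
  have cs: "card S = card {s\<in>S. s < i} + card {s\<in>S. i \<le> s}" using card_split[OF assms] .
  have "sg (ins i S) * (-1) ^ rank (ins i S) i =
        ((-1::'r) ^ (i + \<Sum>S + card {s\<in>S. i \<le> s} + (\<Sum>{..<card S} + card S) + card {s\<in>S. s < i}))"
    unfolding rank_ins unfolding sg_def s c rank_def by (simp add: power_add)
  also have "\<dots> = (-1) ^ (i + (\<Sum>S + \<Sum>{..<card S}))"
    by (rule neg1_eq) (use cs in presburger)
  finally show ?thesis unfolding sg_def by (simp add: power_add)
qed

lemma rank_compl_shift:
  assumes "i < n"
  shows "rank {x. x < n \<and> x \<notin> shift i S} i + rank S i = i"
proof -
  have e: "{s\<in>{x. x < n \<and> x \<notin> shift i S}. s < i} = {x\<in>{..<i}. x \<notin> S}"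
    using assms by (auto simp: mem_shift)
  have e2: "{s\<in>S. s < i} = {x\<in>{..<i}. x \<in> S}" by auto
  have "card {..<i} = card ({x\<in>{..<i}. x \<notin> S} \<union> {x\<in>{..<i}. x \<in> S})" by (rule arg_cong[where f=card]) auto
  also have "\<dots> = card {x\<in>{..<i}. x \<notin> S} + card {x\<in>{..<i}. x \<in> S}" by (rule card_Un_disjoint) auto
  finally have "card {x\<in>{..<i}. x \<notin> S} + card {x\<in>{..<i}. x \<in> S} = card {..<i}" by simp
  then show ?thesis unfolding rank_def e e2 by simp
qed

lemma sg_shift_H:
  assumes "finite S" "card S + 2 * t = p" "i < n"
  shows "(-1) ^ p * sg (shift i S) * (-1) ^ rank {x. x < n \<and> x \<notin> shift i S} i = ((-1::'r::comm_ring_1) ^ i) * sg S"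
proof -
  note r = rank_compl_shift[OF assms(3), of S]
  have cs: "card S = card {s\<in>S. s < i} + card {s\<in>S. i \<le> s}" using card_split[OF assms(1)] .
  have "(-1) ^ p * sg (shift i S) * (-1) ^ rank {x. x < n \<and> x \<notin> shift i S} i =
     ((-1::'r) ^ (p + card {s\<in>S. i \<le> s} + rank {x. x < n \<and> x \<notin> shift i S} i)) * sg S"
    unfolding sg_shift[OF assms(1)] by (simp add: power_add)
  also have "((-1::'r) ^ (p + card {s\<in>S. i \<le> s} + rank {x. x < n \<and> x \<notin> shift i S} i)) = (-1) ^ i"
    by (rule neg1_eq) (use cs r assms(2) in \<open>unfold rank_def, presburger\<close>)
  finally show ?thesis .
qed

lemma nths_Cons_ins0: "nths (x # xs) (ins 0 S) = x # nths xs S"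
proof -
  have "{j. Suc j \<in> ins 0 S} = S" by (auto simp: mem_ins)
  then show ?thesis by (simp add: nths_Cons mem_ins)
qed

lemma nths_Cons_shift0: "nths (x # xs) (shift 0 S) = nths xs S"
proof -
  have "{j. Suc j \<in> shift 0 S} = S" by (auto simp: mem_shift)
  then show ?thesis by (simp add: nths_Cons mem_shift)
qed

lemma sum_split0:
  fixes G :: "nat set \<Rightarrow> 'r::comm_monoid_add"
  shows "(\<Sum>S\<in>Pow {..<Suc n}. G S) = (\<Sum>S\<in>Pow {..<n}. G (ins 0 S)) + (\<Sum>S\<in>Pow {..<n}. G (shift 0 S))"
proof -
  have "(\<Sum>S\<in>Pow {..<Suc n}. G S) = (\<Sum>S\<in>Pow {..<Suc n}. (if 0 \<in> S then G S else 0) + (if 0 \<notin> S then G S else 0))"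
    by (rule sum.cong) auto
  also have "\<dots> = (\<Sum>S\<in>Pow {..<Suc n}. if 0 \<in> S then G S else 0) + (\<Sum>S\<in>Pow {..<Suc n}. if 0 \<notin> S then G S else 0)"
    by (rule sum.distrib)
  finally show ?thesis using sum_ins[of 0 n G] sum_shift[of 0 n G] by simp
qed

lemma reidx_in:
  fixes \<Phi> :: "nat \<Rightarrow> nat set \<Rightarrow> 'r::comm_monoid_add"
  shows "(\<Sum>T'\<in>Pow {..<K}. \<Sum>\<mu>\<in>T'. \<Phi> \<mu> T') = (\<Sum>\<mu><K. \<Sum>T\<in>Pow {..<K - 1}. \<Phi> \<mu> (ins \<mu> T))"
proof -
  have "(\<Sum>T'\<in>Pow {..<K}. \<Sum>\<mu>\<in>T'. \<Phi> \<mu> T') = (\<Sum>T'\<in>Pow {..<K}. \<Sum>\<mu><K. if \<mu> \<in> T' then \<Phi> \<mu> T' else 0)"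
  proof (rule sum.cong[OF refl])
    fix T' assume "T' \<in> Pow {..<K}"
    then have "T' = {\<mu>\<in>{..<K}. \<mu> \<in> T'}" by auto
    then have "(\<Sum>\<mu>\<in>T'. \<Phi> \<mu> T') = (\<Sum>\<mu>\<in>{\<mu>\<in>{..<K}. \<mu> \<in> T'}. \<Phi> \<mu> T')" by simp
    also have "\<dots> = (\<Sum>\<mu><K. if \<mu> \<in> T' then \<Phi> \<mu> T' else 0)" by (rule sum.inter_filter) simp
    finally show "(\<Sum>\<mu>\<in>T'. \<Phi> \<mu> T') = (\<Sum>\<mu><K. if \<mu> \<in> T' then \<Phi> \<mu> T' else 0)" .
  qed
  also have "\<dots> = (\<Sum>\<mu><K. \<Sum>T'\<in>Pow {..<K}. if \<mu> \<in> T' then \<Phi> \<mu> T' else 0)" by (rule sum.swap)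
  also have "\<dots> = (\<Sum>\<mu><K. \<Sum>T\<in>Pow {..<K - 1}. \<Phi> \<mu> (ins \<mu> T))"
  proof (rule sum.cong[OF refl])
    fix \<mu> assume "\<mu> \<in> {..<K}"
    then have m: "\<mu> \<le> K - 1" "Suc (K - 1) = K" by auto
    show "(\<Sum>T'\<in>Pow {..<K}. if \<mu> \<in> T' then \<Phi> \<mu> T' else 0) = (\<Sum>T\<in>Pow {..<K - 1}. \<Phi> \<mu> (ins \<mu> T))"
      using sum_ins[OF m(1), of "\<Phi> \<mu>"] m(2) by simp
  qed
  finally show ?thesis .
qed

lemma reidx_out:
  fixes \<Phi> :: "nat \<Rightarrow> nat set \<Rightarrow> 'r::comm_monoid_add"
  shows "(\<Sum>T'\<in>Pow {..<K}. \<Sum>\<mu>\<in>{x. x < K \<and> x \<notin> T'}. \<Phi> \<mu> T') = (\<Sum>\<mu><K. \<Sum>T\<in>Pow {..<K - 1}. \<Phi> \<mu> (shift \<mu> T))"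
proof -
  have "(\<Sum>T'\<in>Pow {..<K}. \<Sum>\<mu>\<in>{x. x < K \<and> x \<notin> T'}. \<Phi> \<mu> T') = (\<Sum>T'\<in>Pow {..<K}. \<Sum>\<mu><K. if \<mu> \<notin> T' then \<Phi> \<mu> T' else 0)"
  proof (rule sum.cong[OF refl])
    fix T' assume "T' \<in> Pow {..<K}"
    have "{x. x < K \<and> x \<notin> T'} = {\<mu>\<in>{..<K}. \<mu> \<notin> T'}" by auto
    then have "(\<Sum>\<mu>\<in>{x. x < K \<and> x \<notin> T'}. \<Phi> \<mu> T') = (\<Sum>\<mu>\<in>{\<mu>\<in>{..<K}. \<mu> \<notin> T'}. \<Phi> \<mu> T')" by simp
    also have "\<dots> = (\<Sum>\<mu><K. if \<mu> \<notin> T' then \<Phi> \<mu> T' else 0)" by (rule sum.inter_filter) simp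
    finally show "(\<Sum>\<mu>\<in>{x. x < K \<and> x \<notin> T'}. \<Phi> \<mu> T') = (\<Sum>\<mu><K. if \<mu> \<notin> T' then \<Phi> \<mu> T' else 0)" .
  qed
  also have "\<dots> = (\<Sum>\<mu><K. \<Sum>T'\<in>Pow {..<K}. if \<mu> \<notin> T' then \<Phi> \<mu> T' else 0)" by (rule sum.swap)
  also have "\<dots> = (\<Sum>\<mu><K. \<Sum>T\<in>Pow {..<K - 1}. \<Phi> \<mu> (shift \<mu> T))"
  proof (rule sum.cong[OF refl])
    fix \<mu> assume "\<mu> \<in> {..<K}"
    then have m: "\<mu> \<le> K - 1" "Suc (K - 1) = K" by auto
    show "(\<Sum>T'\<in>Pow {..<K}. if \<mu> \<notin> T' then \<Phi> \<mu> T' else 0) = (\<Sum>T\<in>Pow {..<K - 1}. \<Phi> \<mu> (shift \<mu> T))"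
      using sum_shift[OF m(1), of "\<Phi> \<mu>"] m(2) by simp
  qed
  finally show ?thesis .
qed

lemma sum_nths_in:
  fixes g :: "nat \<Rightarrow> 'r::comm_monoid_add"
  assumes "A \<subseteq> {..<length xs}"
  shows "(\<Sum>a<length (nths xs A). g a) = (\<Sum>i\<in>A. g (rank A i))"
proof -
  have f: "finite A" using assms finite_subset by blast
  show ?thesis unfolding length_nths_sub[OF assms] by (rule sum_rank[OF f])
qed

lemma nths_compl: "nths xs (-T) = nths xs {x. x < length xs \<and> x \<notin> T}"
  by (rule nths_cong_len) auto

lemma card_compl_sub: "T \<subseteq> {..<K} \<Longrightarrow> card {x. x < K \<and> x \<notin> T} = K - card T"
proof -
  assume T: "T \<subseteq> {..<K}"
  have "{x. x < K \<and> x \<notin> T} = {..<K} - T" by auto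
  then show ?thesis using T by (simp add: card_Diff_subset finite_subset)
qed

definition dMf :: "('r \<Rightarrow> 'e) \<Rightarrow> (nat \<Rightarrow> 'e list \<Rightarrow> 'r list \<Rightarrow> 'r::comm_ring_1) \<Rightarrow> nat \<Rightarrow> 'e list \<Rightarrow> 'r list \<Rightarrow> 'r" where
  "dMf dE W k es fs = (\<Sum>\<mu><k. W (k - 1) (dE (fs ! \<mu>) # es) (del \<mu> fs))"

lemma del_length: "\<mu> < length xs \<Longrightarrow> length (del \<mu> xs) = length xs - 1"
  unfolding del_def by simp

lemma part_M:
  fixes W H :: "nat \<Rightarrow> 'e list \<Rightarrow> 'r list \<Rightarrow> 'r::comm_ring_1" and dE :: "'r \<Rightarrow> 'e"
  shows "dMf dE (\<lambda>k es fs. PP p W H es fs) (length fs) es fs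
       = PP (Suc p) (dMf dE W) H es fs + (-1) ^ p * PP p W (dMf dE H) es fs"
proof -
  define n where "n = length es"
  define K where "K = length fs"
  define X1 where "X1 \<mu> S T = (if card S + 1 + 2 * card T = p then sg S * W (card T) (dE (fs ! \<mu>) # nths es S) (nths fs (shift \<mu> T))
      * H (K - 1 - card T) (nths es (-S)) (nths fs (- ins \<mu> T)) else 0)" for \<mu> S T
  define X2 where "X2 \<mu> S T = (if card S + 2 * card T = p then sg S * W (card T) (nths es S) (nths fs (shift \<mu> T))
      * H (K - 1 - card T) (dE (fs ! \<mu>) # nths es (-S)) (nths fs (- ins \<mu> T)) else 0)" for \<mu> S T
  have L: "PP p W H (dE (fs ! \<mu>) # es) (del \<mu> fs) =
     (\<Sum>S\<in>Pow {..<n}. \<Sum>T\<in>Pow {..<K - 1}. X1 \<mu> S T) + (-1) ^ p * (\<Sum>S\<in>Pow {..<n}. \<Sum>T\<in>Pow {..<K - 1}. X2 \<mu> S T)"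
    if \<mu>: "\<mu> < K" for \<mu>
  proof -
    define d where "d = dE (fs ! \<mu>)"
    have ld: "length (del \<mu> fs) = K - 1" using \<mu> unfolding K_def by (simp add: del_length)
    define G where "G S = (\<Sum>T\<in>Pow {..<K - 1}. if card S + 2 * card T = p then sg S * W (card T) (nths (d # es) S) (nths (del \<mu> fs) T) *
       H (K - 1 - card T) (nths (d # es) (- S)) (nths (del \<mu> fs) (- T)) else 0)" for S
    have "PP p W H (d # es) (del \<mu> fs) = (\<Sum>S\<in>Pow {..<Suc n}. G S)"
      unfolding PP_def G_def ld n_def by simp
    also have "\<dots> = (\<Sum>S\<in>Pow {..<n}. G (ins 0 S)) + (\<Sum>S\<in>Pow {..<n}. G (shift 0 S))"
      by (rule sum_split0)
    also have "(\<Sum>S\<in>Pow {..<n}. G (ins 0 S)) = (\<Sum>S\<in>Pow {..<n}. \<Sum>T\<in>Pow {..<K - 1}. X1 \<mu> S T)"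
      unfolding G_def
    proof (intro sum.cong refl)
      fix S T assume S: "S \<in> Pow {..<n}" and T: "T \<in> Pow {..<K - 1}"
      have fS: "finite S" using S finite_subset by blast
      have sgi: "sg (ins 0 S) = (sg S :: 'r)" using sg_ins[OF fS, of 0] by (simp add: rank_def)
      have e1: "nths (del \<mu> fs) T = nths fs (shift \<mu> T)" using \<mu> K_def nths_del by blast
      have e2: "nths (del \<mu> fs) (-T) = nths fs (- ins \<mu> T)" using \<mu> K_def nths_del shift_compl by metis
      have e3: "nths (d # es) (- ins 0 S) = nths es (-S)" by (metis nths_Cons_shift0 shift_compl)
      show "(if card (ins 0 S) + 2 * card T = p then sg (ins 0 S) * W (card T) (nths (d # es) (ins 0 S)) (nths (del \<mu> fs) T) *
       H (K - 1 - card T) (nths (d # es) (- ins 0 S)) (nths (del \<mu> fs) (- T)) else 0) = X1 \<mu> S T"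
        unfolding X1_def card_ins[OF fS] sgi e1 e2 e3 nths_Cons_ins0 unfolding d_def by simp
    qed
    also have "(\<Sum>S\<in>Pow {..<n}. G (shift 0 S)) = (-1) ^ p * (\<Sum>S\<in>Pow {..<n}. \<Sum>T\<in>Pow {..<K - 1}. X2 \<mu> S T)"
      unfolding sum_distrib_left G_def
    proof (intro sum.cong refl)
      fix S T assume S: "S \<in> Pow {..<n}" and T: "T \<in> Pow {..<K - 1}"
      have fS: "finite S" using S finite_subset by blast
      have sgs: "sg (shift 0 S) = (-1) ^ card S * (sg S :: 'r)" using sg_shift[OF fS, of 0] by simp
      have e1: "nths (del \<mu> fs) T = nths fs (shift \<mu> T)" using \<mu> K_def nths_del by blast
      have e2: "nths (del \<mu> fs) (-T) = nths fs (- ins \<mu> T)" using \<mu> K_def nths_del shift_compl by metis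
      have e3: "nths (d # es) (- shift 0 S) = d # nths es (-S)" by (metis nths_Cons_ins0 compl_shift)
      have sg2: "(-1) ^ card S = ((-1) ^ p :: 'r)" if "card S + 2 * card T = p"
        by (rule neg1_eq) (use that in presburger)
      show "(if card (shift 0 S) + 2 * card T = p then sg (shift 0 S) * W (card T) (nths (d # es) (shift 0 S)) (nths (del \<mu> fs) T) *
       H (K - 1 - card T) (nths (d # es) (- shift 0 S)) (nths (del \<mu> fs) (- T)) else 0) = (-1) ^ p * X2 \<mu> S T"
        unfolding X2_def card_shift sgs e1 e2 e3 nths_Cons_shift0 unfolding d_def using sg2 by simp
    qed
    finally show ?thesis unfolding d_def .
  qed
  have R1: "PP (Suc p) (dMf dE W) H es fs = (\<Sum>S\<in>Pow {..<n}. \<Sum>\<mu><K. \<Sum>T\<in>Pow {..<K - 1}. X1 \<mu> S T)"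
  proof -
    define Y where "Y \<mu> S T' = (if card S + 2 * card T' = Suc p then sg S * W (card T' - 1) (dE (fs ! \<mu>) # nths es S) (nths fs (T' - {\<mu>}))
        * H (K - card T') (nths es (-S)) (nths fs (-T')) else 0)" for \<mu> S T'
    have "PP (Suc p) (dMf dE W) H es fs = (\<Sum>S\<in>Pow {..<n}. \<Sum>T'\<in>Pow {..<K}. \<Sum>\<mu>\<in>T'. Y \<mu> S T')"
      unfolding PP_def n_def[symmetric] K_def[symmetric]
    proof (intro sum.cong refl)
      fix S T' assume S: "S \<in> Pow {..<n}" and T': "T' \<in> Pow {..<K}"
      have sub: "T' \<subseteq> {..<length fs}" using T' K_def by auto
      have D: "dMf dE W (card T') (nths es S) (nths fs T') = (\<Sum>\<mu>\<in>T'. W (card T' - 1) (dE (fs ! \<mu>) # nths es S) (nths fs (T' - {\<mu>})))"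
      proof -
        have "dMf dE W (card T') (nths es S) (nths fs T') = (\<Sum>a<length (nths fs T'). W (card T' - 1) (dE (nths fs T' ! a) # nths es S) (del a (nths fs T')))"
          unfolding dMf_def length_nths_sub[OF sub] ..
        also have "\<dots> = (\<Sum>\<mu>\<in>T'. W (card T' - 1) (dE (nths fs T' ! rank T' \<mu>) # nths es S) (del (rank T' \<mu>) (nths fs T')))"
          by (rule sum_nths_in[OF sub])
        also have "\<dots> = (\<Sum>\<mu>\<in>T'. W (card T' - 1) (dE (fs ! \<mu>) # nths es S) (nths fs (T' - {\<mu>})))"
        proof (rule sum.cong[OF refl])
          fix \<mu> assume "\<mu> \<in> T'"
          moreover have "\<mu> < length fs" using \<open>\<mu> \<in> T'\<close> sub by auto
          ultimately show "W (card T' - 1) (dE (nths fs T' ! rank T' \<mu>) # nths es S) (del (rank T' \<mu>) (nths fs T')) =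
             W (card T' - 1) (dE (fs ! \<mu>) # nths es S) (nths fs (T' - {\<mu>}))"
            using nths_rank by metis
        qed
        finally show ?thesis .
      qed
      show "(if card S + 2 * card T' = Suc p then sg S * dMf dE W (card T') (nths es S) (nths fs T') * H (K - card T') (nths es (- S)) (nths fs (- T')) else 0)
          = (\<Sum>\<mu>\<in>T'. Y \<mu> S T')"
        unfolding D Y_def by (simp add: sum_distrib_left sum_distrib_right)
    qed
    also have "\<dots> = (\<Sum>S\<in>Pow {..<n}. \<Sum>\<mu><K. \<Sum>T\<in>Pow {..<K - 1}. Y \<mu> S (ins \<mu> T))"
      by (intro sum.cong refl reidx_in)
    also have "\<dots> = (\<Sum>S\<in>Pow {..<n}. \<Sum>\<mu><K. \<Sum>T\<in>Pow {..<K - 1}. X1 \<mu> S T)"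
    proof (intro sum.cong refl)
      fix S \<mu> T assume T: "T \<in> Pow {..<K - 1}"
      have fT: "finite T" using T finite_subset by blast
      show "Y \<mu> S (ins \<mu> T) = X1 \<mu> S T"
        unfolding Y_def X1_def card_ins[OF fT] ins_minus by simp
    qed
    finally show ?thesis .
  qed
  have R2: "PP p W (dMf dE H) es fs = (\<Sum>S\<in>Pow {..<n}. \<Sum>\<mu><K. \<Sum>T\<in>Pow {..<K - 1}. X2 \<mu> S T)"
  proof -
    define Z where "Z \<mu> S T' = (if card S + 2 * card T' = p then sg S * W (card T') (nths es S) (nths fs T')
        * H (K - card T' - 1) (dE (fs ! \<mu>) # nths es (-S)) (nths fs ({x. x < K \<and> x \<notin> T'} - {\<mu>})) else 0)" for \<mu> S T'
    have "PP p W (dMf dE H) es fs = (\<Sum>S\<in>Pow {..<n}. \<Sum>T'\<in>Pow {..<K}. \<Sum>\<mu>\<in>{x. x < K \<and> x \<notin> T'}. Z \<mu> S T')"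
      unfolding PP_def n_def[symmetric] K_def[symmetric]
    proof (intro sum.cong refl)
      fix S T' assume S: "S \<in> Pow {..<n}" and T': "T' \<in> Pow {..<K}"
      define A where "A = {x. x < K \<and> x \<notin> T'}"
      have sub: "A \<subseteq> {..<length fs}" using K_def A_def by auto
      have cA: "card A = K - card T'" unfolding A_def by (rule card_compl_sub) (use T' in auto)
      have nA: "nths fs (-T') = nths fs A" unfolding A_def K_def by (rule nths_compl)
      have D: "dMf dE H (K - card T') (nths es (-S)) (nths fs (-T')) = (\<Sum>\<mu>\<in>A. H (K - card T' - 1) (dE (fs ! \<mu>) # nths es (-S)) (nths fs (A - {\<mu>})))"
      proof -
        have "dMf dE H (K - card T') (nths es (-S)) (nths fs (-T')) = (\<Sum>a<length (nths fs A). H (K - card T' - 1) (dE (nths fs A ! a) # nths es (-S)) (del a (nths fs A)))"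
          unfolding dMf_def nA length_nths_sub[OF sub] cA ..
        also have "\<dots> = (\<Sum>\<mu>\<in>A. H (K - card T' - 1) (dE (nths fs A ! rank A \<mu>) # nths es (-S)) (del (rank A \<mu>) (nths fs A)))"
          by (rule sum_nths_in[OF sub])
        also have "\<dots> = (\<Sum>\<mu>\<in>A. H (K - card T' - 1) (dE (fs ! \<mu>) # nths es (-S)) (nths fs (A - {\<mu>})))"
        proof (rule sum.cong[OF refl])
          fix \<mu> assume "\<mu> \<in> A"
          moreover have "\<mu> < length fs" using \<open>\<mu> \<in> A\<close> sub by auto
          ultimately show "H (K - card T' - 1) (dE (nths fs A ! rank A \<mu>) # nths es (-S)) (del (rank A \<mu>) (nths fs A)) =
             H (K - card T' - 1) (dE (fs ! \<mu>) # nths es (-S)) (nths fs (A - {\<mu>}))"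
            using nths_rank by metis
        qed
        finally show ?thesis .
      qed
      show "(if card S + 2 * card T' = p then sg S * W (card T') (nths es S) (nths fs T') * dMf dE H (K - card T') (nths es (- S)) (nths fs (- T')) else 0)
          = (\<Sum>\<mu>\<in>{x. x < K \<and> x \<notin> T'}. Z \<mu> S T')"
        unfolding D Z_def A_def[symmetric] by (simp add: sum_distrib_left sum_distrib_right)
    qed
    also have "\<dots> = (\<Sum>S\<in>Pow {..<n}. \<Sum>\<mu><K. \<Sum>T\<in>Pow {..<K - 1}. Z \<mu> S (shift \<mu> T))"
      by (intro sum.cong refl reidx_out)
    also have "\<dots> = (\<Sum>S\<in>Pow {..<n}. \<Sum>\<mu><K. \<Sum>T\<in>Pow {..<K - 1}. X2 \<mu> S T)"
    proof (intro sum.cong refl)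
      fix S \<mu> T assume "\<mu> \<in> {..<K}"
      have e: "nths fs ({x. x < K \<and> x \<notin> shift \<mu> T} - {\<mu>}) = nths fs (- ins \<mu> T)"
        by (rule nths_cong_len) (auto simp: K_def ins_def)
      show "Z \<mu> S (shift \<mu> T) = X2 \<mu> S T"
        unfolding Z_def X2_def card_shift e by (simp add: diff_diff_add add.commute)
    qed
    finally show ?thesis .
  qed
  have "dMf dE (\<lambda>k es fs. PP p W H es fs) (length fs) es fs = (\<Sum>\<mu><K. PP p W H (dE (fs ! \<mu>) # es) (del \<mu> fs))"
    unfolding dMf_def K_def ..
  also have "\<dots> = (\<Sum>\<mu><K. (\<Sum>S\<in>Pow {..<n}. \<Sum>T\<in>Pow {..<K - 1}. X1 \<mu> S T) + (-1) ^ p * (\<Sum>S\<in>Pow {..<n}. \<Sum>T\<in>Pow {..<K - 1}. X2 \<mu> S T))"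
    by (rule sum.cong[OF refl]) (use L in auto)
  also have "\<dots> = (\<Sum>S\<in>Pow {..<n}. \<Sum>\<mu><K. \<Sum>T\<in>Pow {..<K - 1}. X1 \<mu> S T) + (-1) ^ p * (\<Sum>S\<in>Pow {..<n}. \<Sum>\<mu><K. \<Sum>T\<in>Pow {..<K - 1}. X2 \<mu> S T)"
    by (simp add: sum.distrib sum_distrib_left[symmetric] sum.swap[of _ "{..<K}"])
  finally show ?thesis unfolding R1 R2 .
qed

definition dRf :: "('e \<Rightarrow> 'r \<Rightarrow> 'r) \<Rightarrow> (nat \<Rightarrow> 'e list \<Rightarrow> 'r list \<Rightarrow> 'r::comm_ring_1) \<Rightarrow> nat \<Rightarrow> 'e list \<Rightarrow> 'r list \<Rightarrow> 'r" where
  "dRf rho W k es fs = (\<Sum>i<length es. (-1) ^ i * rho (es ! i) (W k (del i es) fs))"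

locale rder =
  fixes rho :: "'e \<Rightarrow> 'r::comm_ring_1 \<Rightarrow> 'r"
  assumes radd: "rho x (f + g) = rho x f + rho x g"
    and rleib: "rho x (f * g) = f * rho x g + g * rho x f"
begin

lemma r0: "rho x 0 = 0"
  using radd[of x 0 0] by simp

lemma rsum: "rho x (\<Sum>a\<in>A. f a) = (\<Sum>a\<in>A. rho x (f a))"
proof (cases "finite A")
  case True then show ?thesis by (induction A rule: finite_induct) (simp_all add: r0 radd)
next
  case False then show ?thesis by (simp add: r0)
qed

lemma r1: "rho x 1 = 0"
  using rleib[of x 1 1] by simp

lemma rm1: "rho x (-1) = 0"
  using radd[of x 1 "-1"] r0 r1 by simp

lemma rpow: "rho x ((-1) ^ m) = 0"
  by (cases "even m") (simp_all add: r1 rm1)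

lemma rsgn: "rho x ((-1) ^ m * f) = (-1) ^ m * rho x f"
  using rleib[of x "(-1) ^ m" f] rpow by simp

lemma rif: "rho x (if c then a else 0) = (if c then rho x a else 0)"
  by (simp add: r0)

lemma r3: "rho x ((-1) ^ m * A * B) = (-1) ^ m * rho x A * B + (-1) ^ m * A * rho x B"
proof -
  have "rho x ((-1) ^ m * A * B) = rho x ((-1) ^ m * (A * B))" by (simp add: mult.assoc)
  also have "\<dots> = (-1) ^ m * (A * rho x B + B * rho x A)" by (simp only: rleib rpow mult_zero_right add_0_right)
  finally show ?thesis by (simp add: algebra_simps)
qed

lemma rsg: "rho x (sg S * A * B) = sg S * rho x A * B + sg S * A * rho x B"
  unfolding sg_def by (rule r3)

lemma reorg: "a * b * c = (d::'r) \<Longrightarrow> a * (b * w * (c * r)) = d * w * r"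
proof -
  assume "a * b * c = d"
  moreover have "a * (b * w * (c * r)) = (a * b * c) * w * r" by (simp only: mult_ac)
  ultimately show ?thesis by simp
qed


lemma part_R:
  fixes W H :: "nat \<Rightarrow> 'e list \<Rightarrow> 'r list \<Rightarrow> 'r"
  shows "dRf rho (\<lambda>k es fs. PP p W H es fs) k es fs
       = PP (Suc p) (dRf rho W) H es fs + (-1) ^ p * PP p W (dRf rho H) es fs"
proof -
  define n where "n = length es"
  define K where "K = length fs"
  define V1 where "V1 i S T = (if card S + 2 * card T = p then (-1) ^ i * sg S * rho (es ! i) (W (card T) (nths es (shift i S)) (nths fs T))
      * H (K - card T) (nths es (- ins i S)) (nths fs (-T)) else 0)" for i S T
  define V2 where "V2 i S T = (if card S + 2 * card T = p then (-1) ^ i * sg S * W (card T) (nths es (shift i S)) (nths fs T)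
      * rho (es ! i) (H (K - card T) (nths es (- ins i S)) (nths fs (-T))) else 0)" for i S T
  have L: "(-1) ^ i * rho (es ! i) (PP p W H (del i es) fs) =
     (\<Sum>S\<in>Pow {..<n - 1}. \<Sum>T\<in>Pow {..<K}. V1 i S T + V2 i S T)" if i: "i < n" for i
  proof -
    have ld: "length (del i es) = n - 1" using i unfolding n_def by (simp add: del_length)
    have "(-1) ^ i * rho (es ! i) (PP p W H (del i es) fs) = (\<Sum>S\<in>Pow {..<n - 1}. \<Sum>T\<in>Pow {..<K}.
       (-1) ^ i * rho (es ! i) (if card S + 2 * card T = p then sg S * W (card T) (nths (del i es) S) (nths fs T) *
          H (K - card T) (nths (del i es) (- S)) (nths fs (- T)) else 0))"
      unfolding PP_def ld K_def[symmetric] rsum sum_distrib_left ..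
    also have "\<dots> = (\<Sum>S\<in>Pow {..<n - 1}. \<Sum>T\<in>Pow {..<K}. V1 i S T + V2 i S T)"
    proof (intro sum.cong refl)
      fix S T
      have e1: "nths (del i es) S = nths es (shift i S)" using i n_def nths_del by blast
      have e2: "nths (del i es) (-S) = nths es (- ins i S)" using i n_def nths_del shift_compl by metis
      show "(-1) ^ i * rho (es ! i) (if card S + 2 * card T = p then sg S * W (card T) (nths (del i es) S) (nths fs T) *
          H (K - card T) (nths (del i es) (- S)) (nths fs (- T)) else 0) = V1 i S T + V2 i S T"
        unfolding V1_def V2_def e1 e2 rif rsg by (simp add: algebra_simps)
    qed
    finally show ?thesis .
  qed
  have R1: "PP (Suc p) (dRf rho W) H es fs = (\<Sum>i<n. \<Sum>S\<in>Pow {..<n - 1}. \<Sum>T\<in>Pow {..<K}. V1 i S T)"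
  proof -
    define Y where "Y i S' T = (if card S' + 2 * card T = Suc p then sg S' * (-1) ^ rank S' i * rho (es ! i) (W (card T) (nths es (S' - {i})) (nths fs T))
        * H (K - card T) (nths es (-S')) (nths fs (-T)) else 0)" for i S' T
    have "PP (Suc p) (dRf rho W) H es fs = (\<Sum>S'\<in>Pow {..<n}. \<Sum>T\<in>Pow {..<K}. \<Sum>i\<in>S'. Y i S' T)"
      unfolding PP_def n_def[symmetric] K_def[symmetric]
    proof (intro sum.cong refl)
      fix S' T assume S': "S' \<in> Pow {..<n}"
      have sub: "S' \<subseteq> {..<length es}" using S' n_def by auto
      have D: "dRf rho W (card T) (nths es S') (nths fs T) = (\<Sum>i\<in>S'. (-1) ^ rank S' i * rho (es ! i) (W (card T) (nths es (S' - {i})) (nths fs T)))"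
      proof -
        have "dRf rho W (card T) (nths es S') (nths fs T) = (\<Sum>a<length (nths es S'). (-1) ^ a * rho (nths es S' ! a) (W (card T) (del a (nths es S')) (nths fs T)))"
          unfolding dRf_def ..
        also have "\<dots> = (\<Sum>i\<in>S'. (-1) ^ rank S' i * rho (nths es S' ! rank S' i) (W (card T) (del (rank S' i) (nths es S')) (nths fs T)))"
          by (rule sum_nths_in[OF sub])
        also have "\<dots> = (\<Sum>i\<in>S'. (-1) ^ rank S' i * rho (es ! i) (W (card T) (nths es (S' - {i})) (nths fs T)))"
        proof (rule sum.cong[OF refl])
          fix i assume "i \<in> S'"
          moreover have "i < length es" using \<open>i \<in> S'\<close> sub by auto
          ultimately show "(-1) ^ rank S' i * rho (nths es S' ! rank S' i) (W (card T) (del (rank S' i) (nths es S')) (nths fs T)) =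
             (-1) ^ rank S' i * rho (es ! i) (W (card T) (nths es (S' - {i})) (nths fs T))"
            using nths_rank by metis
        qed
        finally show ?thesis .
      qed
      show "(if card S' + 2 * card T = Suc p then sg S' * dRf rho W (card T) (nths es S') (nths fs T) * H (K - card T) (nths es (- S')) (nths fs (- T)) else 0)
          = (\<Sum>i\<in>S'. Y i S' T)"
        unfolding D Y_def by (simp add: sum_distrib_left sum_distrib_right mult.assoc)
    qed
    also have "\<dots> = (\<Sum>S'\<in>Pow {..<n}. \<Sum>i\<in>S'. \<Sum>T\<in>Pow {..<K}. Y i S' T)"
      by (intro sum.cong refl sum.swap)
    also have "\<dots> = (\<Sum>i<n. \<Sum>S\<in>Pow {..<n - 1}. \<Sum>T\<in>Pow {..<K}. Y i (ins i S) T)"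
      by (rule reidx_in)
    also have "\<dots> = (\<Sum>i<n. \<Sum>S\<in>Pow {..<n - 1}. \<Sum>T\<in>Pow {..<K}. V1 i S T)"
    proof (intro sum.cong refl)
      fix i S T assume S: "S \<in> Pow {..<n - 1}"
      have fS: "finite S" using S finite_subset by blast
      have sgn: "sg (ins i S) * (-1) ^ rank (ins i S) i = ((-1) ^ i * sg S :: 'r)" by (rule sg_ins[OF fS])
      show "Y i (ins i S) T = V1 i S T"
        unfolding Y_def V1_def card_ins[OF fS] ins_minus using sgn by (simp add: mult.assoc)
    qed
    finally show ?thesis .
  qed
  have R2: "(-1) ^ p * PP p W (dRf rho H) es fs = (\<Sum>i<n. \<Sum>S\<in>Pow {..<n - 1}. \<Sum>T\<in>Pow {..<K}. V2 i S T)"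
  proof -
    define Z where "Z i S' T = (if card S' + 2 * card T = p then sg S' * W (card T) (nths es S') (nths fs T) * ((-1) ^ rank {x. x < n \<and> x \<notin> S'} i
        * rho (es ! i) (H (K - card T) (nths es ({x. x < n \<and> x \<notin> S'} - {i})) (nths fs (-T)))) else 0)" for i S' T
    have "PP p W (dRf rho H) es fs = (\<Sum>S'\<in>Pow {..<n}. \<Sum>T\<in>Pow {..<K}. \<Sum>i\<in>{x. x < n \<and> x \<notin> S'}. Z i S' T)"
      unfolding PP_def n_def[symmetric] K_def[symmetric]
    proof (intro sum.cong refl)
      fix S' T assume S': "S' \<in> Pow {..<n}"
      define A where "A = {x. x < n \<and> x \<notin> S'}"
      have sub: "A \<subseteq> {..<length es}" using n_def A_def by auto
      have nA: "nths es (-S') = nths es A" unfolding A_def n_def by (rule nths_compl)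
      have D: "dRf rho H (K - card T) (nths es (-S')) (nths fs (-T)) = (\<Sum>i\<in>A. (-1) ^ rank A i * rho (es ! i) (H (K - card T) (nths es (A - {i})) (nths fs (-T))))"
      proof -
        have "dRf rho H (K - card T) (nths es (-S')) (nths fs (-T)) = (\<Sum>a<length (nths es A). (-1) ^ a * rho (nths es A ! a) (H (K - card T) (del a (nths es A)) (nths fs (-T))))"
          unfolding dRf_def nA ..
        also have "\<dots> = (\<Sum>i\<in>A. (-1) ^ rank A i * rho (nths es A ! rank A i) (H (K - card T) (del (rank A i) (nths es A)) (nths fs (-T))))"
          by (rule sum_nths_in[OF sub])
        also have "\<dots> = (\<Sum>i\<in>A. (-1) ^ rank A i * rho (es ! i) (H (K - card T) (nths es (A - {i})) (nths fs (-T))))"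
        proof (rule sum.cong[OF refl])
          fix i assume "i \<in> A"
          moreover have "i < length es" using \<open>i \<in> A\<close> sub by auto
          ultimately show "(-1) ^ rank A i * rho (nths es A ! rank A i) (H (K - card T) (del (rank A i) (nths es A)) (nths fs (-T))) =
             (-1) ^ rank A i * rho (es ! i) (H (K - card T) (nths es (A - {i})) (nths fs (-T)))"
            using nths_rank by metis
        qed
        finally show ?thesis .
      qed
      show "(if card S' + 2 * card T = p then sg S' * W (card T) (nths es S') (nths fs T) * dRf rho H (K - card T) (nths es (- S')) (nths fs (- T)) else 0)
          = (\<Sum>i\<in>{x. x < n \<and> x \<notin> S'}. Z i S' T)"
        unfolding D Z_def A_def[symmetric] by (simp add: sum_distrib_left)
    qed
    also have "\<dots> = (\<Sum>S'\<in>Pow {..<n}. \<Sum>i\<in>{x. x < n \<and> x \<notin> S'}. \<Sum>T\<in>Pow {..<K}. Z i S' T)"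
      by (intro sum.cong refl sum.swap)
    also have "\<dots> = (\<Sum>i<n. \<Sum>S\<in>Pow {..<n - 1}. \<Sum>T\<in>Pow {..<K}. Z i (shift i S) T)"
      by (rule reidx_out)
    finally have "(-1) ^ p * PP p W (dRf rho H) es fs = (\<Sum>i<n. \<Sum>S\<in>Pow {..<n - 1}. \<Sum>T\<in>Pow {..<K}. (-1) ^ p * Z i (shift i S) T)"
      by (simp add: sum_distrib_left)
    also have "\<dots> = (\<Sum>i<n. \<Sum>S\<in>Pow {..<n - 1}. \<Sum>T\<in>Pow {..<K}. V2 i S T)"
    proof (intro sum.cong refl)
      fix i and S T :: "nat set" assume i: "i \<in> {..<n}" and S: "S \<in> Pow {..<n - 1}"
      have fS: "finite S" using S finite_subset by blast
      have e: "nths es ({x. x < n \<and> x \<notin> shift i S} - {i}) = nths es (- ins i S)"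
        by (rule nths_cong_len) (auto simp: n_def ins_def)
      have sgn: "card S + 2 * card T = p \<Longrightarrow> (-1) ^ p * sg (shift i S) * (-1) ^ rank {x. x < n \<and> x \<notin> shift i S} i = ((-1) ^ i * sg S :: 'r)"
        by (rule sg_shift_H[OF fS]) (use i in auto)
      show "(-1) ^ p * Z i (shift i S) T = V2 i S T"
      proof (cases "card S + 2 * card T = p")
        case True
        have "(-1) ^ p * (sg (shift i S) * W (card T) (nths es (shift i S)) (nths fs T) * ((-1) ^ rank {x. x < n \<and> x \<notin> shift i S} i
           * rho (es ! i) (H (K - card T) (nths es (- ins i S)) (nths fs (-T))))) =
           (-1) ^ i * sg S * W (card T) (nths es (shift i S)) (nths fs T) * rho (es ! i) (H (K - card T) (nths es (- ins i S)) (nths fs (-T)))"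
          by (rule reorg[OF sgn[OF True]])
        then show ?thesis unfolding Z_def V2_def card_shift e using True by simp
      next
        case False
        then show ?thesis unfolding Z_def V2_def card_shift by simp
      qed
    qed
    finally show ?thesis .
  qed
  have "dRf rho (\<lambda>k es fs. PP p W H es fs) k es fs = (\<Sum>i<n. (-1) ^ i * rho (es ! i) (PP p W H (del i es) fs))"
    unfolding dRf_def n_def ..
  also have "\<dots> = (\<Sum>i<n. \<Sum>S\<in>Pow {..<n - 1}. \<Sum>T\<in>Pow {..<K}. V1 i S T + V2 i S T)"
    by (rule sum.cong[OF refl]) (use L in auto)
  also have "\<dots> = (\<Sum>i<n. \<Sum>S\<in>Pow {..<n - 1}. \<Sum>T\<in>Pow {..<K}. V1 i S T) + (\<Sum>i<n. \<Sum>S\<in>Pow {..<n - 1}. \<Sum>T\<in>Pow {..<K}. V2 i S T)"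
    by (simp add: sum.distrib)
  finally show ?thesis unfolding R1 R2 .
qed

end

lemma reidx_in2:
  fixes \<Phi> :: "nat \<Rightarrow> nat \<Rightarrow> nat set \<Rightarrow> 'r::comm_monoid_add"
  shows "(\<Sum>S'\<in>Pow {..<n}. \<Sum>j\<in>S'. \<Sum>i\<in>{s\<in>S'. s < j}. \<Phi> i j S') =
         (\<Sum>j<n. \<Sum>i<j. \<Sum>S\<in>Pow {..<n - 1}. if j \<in> ins i S then \<Phi> i j (ins i S) else 0)"
proof -
  have "(\<Sum>S'\<in>Pow {..<n}. \<Sum>j\<in>S'. \<Sum>i\<in>{s\<in>S'. s < j}. \<Phi> i j S') =
        (\<Sum>S'\<in>Pow {..<n}. \<Sum>j<n. \<Sum>i<j. if i \<in> S' then (if j \<in> S' then \<Phi> i j S' else 0) else 0)"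
  proof (rule sum.cong[OF refl])
    fix S' assume S': "S' \<in> Pow {..<n}"
    have "(\<Sum>j\<in>S'. \<Sum>i\<in>{s\<in>S'. s < j}. \<Phi> i j S') = (\<Sum>j\<in>{j\<in>{..<n}. j \<in> S'}. \<Sum>i\<in>{s\<in>{..<j}. s \<in> S'}. \<Phi> i j S')"
    proof -
      have "S' = {j\<in>{..<n}. j \<in> S'}" using S' by auto
      moreover have "\<And>j. {s\<in>S'. s < j} = {s\<in>{..<j}. s \<in> S'}" by auto
      ultimately show ?thesis by simp
    qed
    also have "\<dots> = (\<Sum>j<n. if j \<in> S' then (\<Sum>i\<in>{s\<in>{..<j}. s \<in> S'}. \<Phi> i j S') else 0)"
      by (rule sum.inter_filter) simp
    also have "\<dots> = (\<Sum>j<n. if j \<in> S' then \<Sum>i<j. if i \<in> S' then \<Phi> i j S' else 0 else 0)"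
    proof (rule sum.cong[OF refl])
      fix j
      have "(\<Sum>i\<in>{s\<in>{..<j}. s \<in> S'}. \<Phi> i j S') = (\<Sum>i<j. if i \<in> S' then \<Phi> i j S' else 0)"
        by (rule sum.inter_filter) simp
      then show "(if j \<in> S' then (\<Sum>i\<in>{s\<in>{..<j}. s \<in> S'}. \<Phi> i j S') else 0) = (if j \<in> S' then \<Sum>i<j. if i \<in> S' then \<Phi> i j S' else 0 else 0)"
        by simp
    qed
    also have "\<dots> = (\<Sum>j<n. \<Sum>i<j. if i \<in> S' then (if j \<in> S' then \<Phi> i j S' else 0) else 0)"
      by (rule sum.cong[OF refl]) (auto intro!: sum.cong sum.neutral)
    finally show "(\<Sum>j\<in>S'. \<Sum>i\<in>{s\<in>S'. s < j}. \<Phi> i j S') = (\<Sum>j<n. \<Sum>i<j. if i \<in> S' then (if j \<in> S' then \<Phi> i j S' else 0) else 0)" .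
  qed
  also have "\<dots> = (\<Sum>j<n. \<Sum>i<j. \<Sum>S'\<in>Pow {..<n}. if i \<in> S' then (if j \<in> S' then \<Phi> i j S' else 0) else 0)"
    by (simp add: sum.swap[of _ "Pow {..<n}"])
  also have "\<dots> = (\<Sum>j<n. \<Sum>i<j. \<Sum>S\<in>Pow {..<n - 1}. if j \<in> ins i S then \<Phi> i j (ins i S) else 0)"
  proof (rule sum.cong[OF refl], rule sum.cong[OF refl])
    fix j i assume "j \<in> {..<n}" "i \<in> {..<j}"
    then have m: "i \<le> n - 1" "Suc (n - 1) = n" by auto
    show "(\<Sum>S'\<in>Pow {..<n}. if i \<in> S' then (if j \<in> S' then \<Phi> i j S' else 0) else 0) =
          (\<Sum>S\<in>Pow {..<n - 1}. if j \<in> ins i S then \<Phi> i j (ins i S) else 0)"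
      using sum_ins[OF m(1), of "\<lambda>S'. if j \<in> S' then \<Phi> i j S' else 0"] m(2) by simp
  qed
  finally show ?thesis .
qed

lemma reidx_out2:
  fixes \<Phi> :: "nat \<Rightarrow> nat \<Rightarrow> nat set \<Rightarrow> 'r::comm_monoid_add"
  shows "(\<Sum>S'\<in>Pow {..<n}. \<Sum>j\<in>{x. x < n \<and> x \<notin> S'}. \<Sum>i\<in>{s\<in>{x. x < n \<and> x \<notin> S'}. s < j}. \<Phi> i j S') =
         (\<Sum>j<n. \<Sum>i<j. \<Sum>S\<in>Pow {..<n - 1}. if j \<notin> shift i S then \<Phi> i j (shift i S) else 0)"
proof -
  have "(\<Sum>S'\<in>Pow {..<n}. \<Sum>j\<in>{x. x < n \<and> x \<notin> S'}. \<Sum>i\<in>{s\<in>{x. x < n \<and> x \<notin> S'}. s < j}. \<Phi> i j S') =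
        (\<Sum>S'\<in>Pow {..<n}. \<Sum>j<n. \<Sum>i<j. if i \<notin> S' then (if j \<notin> S' then \<Phi> i j S' else 0) else 0)"
  proof (rule sum.cong[OF refl])
    fix S' assume S': "S' \<in> Pow {..<n}"
    have "(\<Sum>j\<in>{x. x < n \<and> x \<notin> S'}. \<Sum>i\<in>{s\<in>{x. x < n \<and> x \<notin> S'}. s < j}. \<Phi> i j S') = (\<Sum>j\<in>{j\<in>{..<n}. j \<notin> S'}. \<Sum>i\<in>{s\<in>{..<j}. s \<notin> S'}. \<Phi> i j S')"
    proof -
      have "{x. x < n \<and> x \<notin> S'} = {j\<in>{..<n}. j \<notin> S'}" by auto
      moreover have "\<And>j. j < n \<Longrightarrow> {s\<in>{x. x < n \<and> x \<notin> S'}. s < j} = {s\<in>{..<j}. s \<notin> S'}" by auto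
      ultimately show ?thesis by (intro sum.cong) auto
    qed
    also have "\<dots> = (\<Sum>j<n. if j \<notin> S' then (\<Sum>i\<in>{s\<in>{..<j}. s \<notin> S'}. \<Phi> i j S') else 0)"
      by (rule sum.inter_filter) simp
    also have "\<dots> = (\<Sum>j<n. if j \<notin> S' then \<Sum>i<j. if i \<notin> S' then \<Phi> i j S' else 0 else 0)"
    proof (rule sum.cong[OF refl])
      fix j
      have "(\<Sum>i\<in>{s\<in>{..<j}. s \<notin> S'}. \<Phi> i j S') = (\<Sum>i<j. if i \<notin> S' then \<Phi> i j S' else 0)"
        by (rule sum.inter_filter) simp
      then show "(if j \<notin> S' then (\<Sum>i\<in>{s\<in>{..<j}. s \<notin> S'}. \<Phi> i j S') else 0) = (if j \<notin> S' then \<Sum>i<j. if i \<notin> S' then \<Phi> i j S' else 0 else 0)"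
        by simp
    qed
    also have "\<dots> = (\<Sum>j<n. \<Sum>i<j. if i \<notin> S' then (if j \<notin> S' then \<Phi> i j S' else 0) else 0)"
      by (rule sum.cong[OF refl]) (auto intro!: sum.cong sum.neutral)
    finally show "(\<Sum>j\<in>{x. x < n \<and> x \<notin> S'}. \<Sum>i\<in>{s\<in>{x. x < n \<and> x \<notin> S'}. s < j}. \<Phi> i j S') = (\<Sum>j<n. \<Sum>i<j. if i \<notin> S' then (if j \<notin> S' then \<Phi> i j S' else 0) else 0)" .
  qed
  also have "\<dots> = (\<Sum>j<n. \<Sum>i<j. \<Sum>S'\<in>Pow {..<n}. if i \<notin> S' then (if j \<notin> S' then \<Phi> i j S' else 0) else 0)"
    by (simp add: sum.swap[of _ "Pow {..<n}"])
  also have "\<dots> = (\<Sum>j<n. \<Sum>i<j. \<Sum>S\<in>Pow {..<n - 1}. if j \<notin> shift i S then \<Phi> i j (shift i S) else 0)"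
  proof (rule sum.cong[OF refl], rule sum.cong[OF refl])
    fix j i assume "j \<in> {..<n}" "i \<in> {..<j}"
    then have m: "i \<le> n - 1" "Suc (n - 1) = n" by auto
    show "(\<Sum>S'\<in>Pow {..<n}. if i \<notin> S' then (if j \<notin> S' then \<Phi> i j S' else 0) else 0) =
          (\<Sum>S\<in>Pow {..<n - 1}. if j \<notin> shift i S then \<Phi> i j (shift i S) else 0)"
      using sum_shift[OF m(1), of "\<lambda>S'. if j \<notin> S' then \<Phi> i j S' else 0"] m(2) by simp
  qed
  finally show ?thesis .
qed

definition dBf :: "('e \<Rightarrow> 'e \<Rightarrow> 'e) \<Rightarrow> (nat \<Rightarrow> 'e list \<Rightarrow> 'r list \<Rightarrow> 'r::comm_ring_1) \<Rightarrow> nat \<Rightarrow> 'e list \<Rightarrow> 'r list \<Rightarrow> 'r" where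
  "dBf br W k es fs = (\<Sum>j<length es. \<Sum>i<j. (-1) ^ (Suc i) * W k (del i (es[j := br (es ! i) (es ! j)])) fs)"

lemma dB_reidx:
  fixes V :: "nat \<Rightarrow> 'e list \<Rightarrow> 'r list \<Rightarrow> 'r::comm_ring_1"
  assumes sub: "A \<subseteq> {..<length xs}"
  shows "dBf br V k (nths xs A) gs = (\<Sum>j\<in>A. \<Sum>i\<in>{s\<in>A. s < j}.
     (-1) ^ Suc (rank A i) * V k (nths (xs[j := br (xs ! i) (xs ! j)]) (A - {i})) gs)"
proof -
  have fA: "finite A" using sub finite_subset by blast
  have "dBf br V k (nths xs A) gs = (\<Sum>b<card A. \<Sum>a<b. (-1) ^ (Suc a) * V k (del a ((nths xs A)[b := br (nths xs A ! a) (nths xs A ! b)])) gs)"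
    unfolding dBf_def length_nths_sub[OF sub] ..
  also have "\<dots> = (\<Sum>j\<in>A. \<Sum>i\<in>{s\<in>A. s < j}. (-1) ^ (Suc (rank A i)) * V k (del (rank A i) ((nths xs A)[rank A j := br (nths xs A ! rank A i) (nths xs A ! rank A j)])) gs)"
    by (rule sum_rank2[OF fA])
  also have "\<dots> = (\<Sum>j\<in>A. \<Sum>i\<in>{s\<in>A. s < j}. (-1) ^ Suc (rank A i) * V k (nths (xs[j := br (xs ! i) (xs ! j)]) (A - {i})) gs)"
  proof (rule sum.cong[OF refl], rule sum.cong[OF refl])
    fix j i assume j: "j \<in> A" and i: "i \<in> {s\<in>A. s < j}"
    have jl: "j < length xs" and il: "i < length xs" and iA: "i \<in> A" using i j sub by auto
    define v where "v = br (xs ! i) (xs ! j)"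
    have a: "nths xs A ! rank A i = xs ! i" using nths_rank(2)[OF iA il] .
    have b: "nths xs A ! rank A j = xs ! j" using nths_rank(2)[OF j jl] .
    have c: "(nths xs A)[rank A j := v] = nths (xs[j := v]) A" using nths_upd_in[OF j jl] by simp
    have il2: "i < length (xs[j := v])" using il by simp
    have d: "del (rank A i) (nths (xs[j := v]) A) = nths (xs[j := v]) (A - {i})" using nths_rank(3)[OF iA il2] .
    show "(-1) ^ (Suc (rank A i)) * V k (del (rank A i) ((nths xs A)[rank A j := br (nths xs A ! rank A i) (nths xs A ! rank A j)])) gs =
        (-1) ^ Suc (rank A i) * V k (nths (xs[j := br (xs ! i) (xs ! j)]) (A - {i})) gs"
      unfolding a b v_def[symmetric] c d ..
  qed
  finally show ?thesis .
qed

lemma reorgY: "a * b = c * (d::'r::comm_ring_1) \<Longrightarrow> a * (b * w) * h = c * (d * w * h)"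
proof -
  assume e: "a * b = c * d"
  have "a * (b * w) * h = (a * b) * w * h" by (simp only: mult_ac)
  also have "\<dots> = (c * d) * w * h" using e by simp
  also have "\<dots> = c * (d * w * h)" by (simp only: mult_ac)
  finally show ?thesis .
qed

lemma reorgZ: "a * b * c = d * (e::'r::comm_ring_1) \<Longrightarrow> a * (b * w * (c * h)) = d * (e * w * h)"
proof -
  assume eq: "a * b * c = d * e"
  have "a * (b * w * (c * h)) = (a * b * c) * w * h" by (simp only: mult_ac)
  also have "\<dots> = (d * e) * w * h" using eq by simp
  also have "\<dots> = d * (e * w * h)" by (simp only: mult_ac)
  finally show ?thesis .
qed


lemma part_B:
  fixes W H :: "nat \<Rightarrow> 'e list \<Rightarrow> 'r list \<Rightarrow> 'r::comm_ring_1" and br :: "'e \<Rightarrow> 'e \<Rightarrow> 'e"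
  shows "dBf br (\<lambda>k es fs. PP p W H es fs) k es fs
       = PP (Suc p) (dBf br W) H es fs + (-1) ^ p * PP p W (dBf br H) es fs"
proof -
  define n where "n = length es"
  define K where "K = length fs"
  define E where "E i j = es[j := br (es ! i) (es ! j)]" for i j
  have lE: "length (E i j) = n" for i j unfolding E_def n_def by simp
  define c where "c i j S T = (if card S + 2 * card T = p then sg S * W (card T) (nths (E i j) (shift i S)) (nths fs T)
      * H (K - card T) (nths (E i j) (- ins i S)) (nths fs (-T)) else 0)" for i j S T
  define Y where "Y i j S' T = (if card S' + 2 * card T = Suc p then sg S' * ((-1) ^ Suc (rank S' i) * W (card T) (nths (E i j) (S' - {i})) (nths fs T))
      * H (K - card T) (nths es (-S')) (nths fs (-T)) else 0)" for i j S' T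
  define Z where "Z i j S' T = (if card S' + 2 * card T = p then sg S' * W (card T) (nths es S') (nths fs T) *
      ((-1) ^ Suc (rank {x. x < n \<and> x \<notin> S'} i) * H (K - card T) (nths (E i j) ({x. x < n \<and> x \<notin> S'} - {i})) (nths fs (-T))) else 0)" for i j S' T
  have LHS: "dBf br (\<lambda>k es fs. PP p W H es fs) k es fs = (\<Sum>j<n. \<Sum>i<j. \<Sum>S\<in>Pow {..<n - 1}. \<Sum>T\<in>Pow {..<K}. (-1) ^ Suc i * c i j S T)"
  proof -
    have "dBf br (\<lambda>k es fs. PP p W H es fs) k es fs = (\<Sum>j<n. \<Sum>i<j. (-1) ^ Suc i * PP p W H (del i (E i j)) fs)"
      unfolding dBf_def n_def E_def ..
    also have "\<dots> = (\<Sum>j<n. \<Sum>i<j. \<Sum>S\<in>Pow {..<n - 1}. \<Sum>T\<in>Pow {..<K}. (-1) ^ Suc i * c i j S T)"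
    proof (rule sum.cong[OF refl], rule sum.cong[OF refl])
      fix j i assume j: "j \<in> {..<n}" and i: "i \<in> {..<j}"
      have il: "i < length (E i j)" using i j lE by auto
      have ld: "length (del i (E i j)) = n - 1" using il lE by (simp add: del_length)
      show "(-1) ^ Suc i * PP p W H (del i (E i j)) fs = (\<Sum>S\<in>Pow {..<n - 1}. \<Sum>T\<in>Pow {..<K}. (-1) ^ Suc i * c i j S T)"
        unfolding PP_def ld K_def[symmetric] sum_distrib_left c_def nths_del[OF il] shift_compl ..
    qed
    finally show ?thesis .
  qed
  have R1: "PP (Suc p) (dBf br W) H es fs = (\<Sum>j<n. \<Sum>i<j. \<Sum>S\<in>Pow {..<n - 1}. if j \<in> ins i S then (\<Sum>T\<in>Pow {..<K}. Y i j (ins i S) T) else 0)"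
  proof -
    have "PP (Suc p) (dBf br W) H es fs = (\<Sum>S'\<in>Pow {..<n}. \<Sum>T\<in>Pow {..<K}. \<Sum>j\<in>S'. \<Sum>i\<in>{s\<in>S'. s < j}. Y i j S' T)"
      unfolding PP_def n_def[symmetric] K_def[symmetric]
    proof (rule sum.cong[OF refl], rule sum.cong[OF refl])
      fix S' T assume S': "S' \<in> Pow {..<n}"
      have sub: "S' \<subseteq> {..<length es}" using S' n_def by auto
      show "(if card S' + 2 * card T = Suc p then sg S' * dBf br W (card T) (nths es S') (nths fs T) * H (K - card T) (nths es (- S')) (nths fs (- T)) else 0)
          = (\<Sum>j\<in>S'. \<Sum>i\<in>{s\<in>S'. s < j}. Y i j S' T)"
        unfolding dB_reidx[OF sub] Y_def E_def by (simp add: sum_distrib_left sum_distrib_right)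
    qed
    also have "\<dots> = (\<Sum>S'\<in>Pow {..<n}. \<Sum>j\<in>S'. \<Sum>i\<in>{s\<in>S'. s < j}. \<Sum>T\<in>Pow {..<K}. Y i j S' T)"
    proof (rule sum.cong[OF refl])
      fix S'
      have "(\<Sum>T\<in>Pow {..<K}. \<Sum>j\<in>S'. \<Sum>i\<in>{s\<in>S'. s < j}. Y i j S' T) = (\<Sum>j\<in>S'. \<Sum>T\<in>Pow {..<K}. \<Sum>i\<in>{s\<in>S'. s < j}. Y i j S' T)"
        by (rule sum.swap)
      also have "\<dots> = (\<Sum>j\<in>S'. \<Sum>i\<in>{s\<in>S'. s < j}. \<Sum>T\<in>Pow {..<K}. Y i j S' T)"
        by (rule sum.cong[OF refl]) (rule sum.swap)
      finally show "(\<Sum>T\<in>Pow {..<K}. \<Sum>j\<in>S'. \<Sum>i\<in>{s\<in>S'. s < j}. Y i j S' T) = (\<Sum>j\<in>S'. \<Sum>i\<in>{s\<in>S'. s < j}. \<Sum>T\<in>Pow {..<K}. Y i j S' T)" .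
    qed
    also have "\<dots> = (\<Sum>j<n. \<Sum>i<j. \<Sum>S\<in>Pow {..<n - 1}. if j \<in> ins i S then (\<Sum>T\<in>Pow {..<K}. Y i j (ins i S) T) else 0)"
      by (rule reidx_in2)
    finally show ?thesis .
  qed
  have R2: "PP p W (dBf br H) es fs = (\<Sum>j<n. \<Sum>i<j. \<Sum>S\<in>Pow {..<n - 1}. if j \<notin> shift i S then (\<Sum>T\<in>Pow {..<K}. Z i j (shift i S) T) else 0)"
  proof -
    have "PP p W (dBf br H) es fs = (\<Sum>S'\<in>Pow {..<n}. \<Sum>T\<in>Pow {..<K}. \<Sum>j\<in>{x. x < n \<and> x \<notin> S'}. \<Sum>i\<in>{s\<in>{x. x < n \<and> x \<notin> S'}. s < j}. Z i j S' T)"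
      unfolding PP_def n_def[symmetric] K_def[symmetric]
    proof (rule sum.cong[OF refl], rule sum.cong[OF refl])
      fix S' T assume S': "S' \<in> Pow {..<n}"
      define A where "A = {x. x < n \<and> x \<notin> S'}"
      have sub: "A \<subseteq> {..<length es}" using n_def A_def by auto
      have nA: "nths es (-S') = nths es A" unfolding A_def n_def by (rule nths_compl)
      show "(if card S' + 2 * card T = p then sg S' * W (card T) (nths es S') (nths fs T) * dBf br H (K - card T) (nths es (- S')) (nths fs (- T)) else 0)
          = (\<Sum>j\<in>{x. x < n \<and> x \<notin> S'}. \<Sum>i\<in>{s\<in>{x. x < n \<and> x \<notin> S'}. s < j}. Z i j S' T)"
        unfolding nA dB_reidx[OF sub] Z_def E_def A_def[symmetric] by (simp add: sum_distrib_left)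
    qed
    also have "\<dots> = (\<Sum>S'\<in>Pow {..<n}. \<Sum>j\<in>{x. x < n \<and> x \<notin> S'}. \<Sum>i\<in>{s\<in>{x. x < n \<and> x \<notin> S'}. s < j}. \<Sum>T\<in>Pow {..<K}. Z i j S' T)"
    proof (rule sum.cong[OF refl])
      fix S'
      define A where "A = {x. x < n \<and> x \<notin> S'}"
      have "(\<Sum>T\<in>Pow {..<K}. \<Sum>j\<in>A. \<Sum>i\<in>{s\<in>A. s < j}. Z i j S' T) = (\<Sum>j\<in>A. \<Sum>T\<in>Pow {..<K}. \<Sum>i\<in>{s\<in>A. s < j}. Z i j S' T)"
        by (rule sum.swap)
      also have "\<dots> = (\<Sum>j\<in>A. \<Sum>i\<in>{s\<in>A. s < j}. \<Sum>T\<in>Pow {..<K}. Z i j S' T)"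
        by (rule sum.cong[OF refl]) (rule sum.swap)
      finally show "(\<Sum>T\<in>Pow {..<K}. \<Sum>j\<in>{x. x < n \<and> x \<notin> S'}. \<Sum>i\<in>{s\<in>{x. x < n \<and> x \<notin> S'}. s < j}. Z i j S' T) =
          (\<Sum>j\<in>{x. x < n \<and> x \<notin> S'}. \<Sum>i\<in>{s\<in>{x. x < n \<and> x \<notin> S'}. s < j}. \<Sum>T\<in>Pow {..<K}. Z i j S' T)"
        unfolding A_def .
    qed
    also have "\<dots> = (\<Sum>j<n. \<Sum>i<j. \<Sum>S\<in>Pow {..<n - 1}. if j \<notin> shift i S then (\<Sum>T\<in>Pow {..<K}. Z i j (shift i S) T) else 0)"
      by (rule reidx_out2)
    finally show ?thesis .
  qed
  have PW: "(\<Sum>T\<in>Pow {..<K}. (-1) ^ Suc i * c i j S T) =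
     (if j \<in> ins i S then (\<Sum>T\<in>Pow {..<K}. Y i j (ins i S) T) else 0) +
     (-1) ^ p * (if j \<notin> shift i S then (\<Sum>T\<in>Pow {..<K}. Z i j (shift i S) T) else 0)"
    if j: "j < n" and i: "i < j" and S: "S \<in> Pow {..<n - 1}" for j i S
  proof -
    have fS: "finite S" using S finite_subset by blast
    have jj: "j \<in> ins i S \<longleftrightarrow> j \<in> shift i S" using i unfolding ins_def by auto
    show ?thesis
    proof (cases "j \<in> ins i S")
      case True
      have e1: "nths (E i j) (- ins i S) = nths es (- ins i S)" unfolding E_def using True by (simp add: nths_upd_notin)
      have sgn: "sg (ins i S) * (-1) ^ Suc (rank (ins i S) i) = ((-1) ^ Suc i * sg S :: 'r)"
        using sg_ins[OF fS, of i] by (simp add: algebra_simps)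
      have "(\<Sum>T\<in>Pow {..<K}. (-1) ^ Suc i * c i j S T) = (\<Sum>T\<in>Pow {..<K}. Y i j (ins i S) T)"
      proof (rule sum.cong[OF refl])
        fix T :: "nat set"
        show "(-1) ^ Suc i * c i j S T = Y i j (ins i S) T"
        proof (cases "card S + 2 * card T = p")
          case c1: True
          have "(sg (ins i S) * ((-1) ^ Suc (rank (ins i S) i) * W (card T) (nths (E i j) (shift i S)) (nths fs T))) * H (K - card T) (nths es (- ins i S)) (nths fs (-T))
            = (-1) ^ Suc i * (sg S * W (card T) (nths (E i j) (shift i S)) (nths fs T) * H (K - card T) (nths es (- ins i S)) (nths fs (-T)))"
            by (rule reorgY[OF sgn])
          then show ?thesis unfolding c_def Y_def card_ins[OF fS] ins_minus e1 using c1 by simp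
        next
          case False
          then show ?thesis unfolding c_def Y_def card_ins[OF fS] by simp
        qed
      qed
      then show ?thesis using True jj by simp
    next
      case False
      then have jn: "j \<notin> shift i S" using jj by simp
      have e1: "nths (E i j) (shift i S) = nths es (shift i S)" unfolding E_def using jn by (simp add: nths_upd_notin)
      have e2: "nths (E i j) ({x. x < n \<and> x \<notin> shift i S} - {i}) = nths (E i j) (- ins i S)"
        by (rule nths_cong_len) (auto simp: lE ins_def)
      have "(\<Sum>T\<in>Pow {..<K}. (-1) ^ Suc i * c i j S T) = (\<Sum>T\<in>Pow {..<K}. (-1) ^ p * Z i j (shift i S) T)"
      proof (rule sum.cong[OF refl])
        fix T :: "nat set"
        show "(-1) ^ Suc i * c i j S T = (-1) ^ p * Z i j (shift i S) T"
        proof (cases "card S + 2 * card T = p")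
          case c1: True
          have sgn: "(-1) ^ p * sg (shift i S) * (-1) ^ Suc (rank {x. x < n \<and> x \<notin> shift i S} i) = ((-1) ^ Suc i * sg S :: 'r)"
            using sg_shift_H[OF fS c1, of i n] i j by (simp add: algebra_simps)
          have "(-1) ^ p * (sg (shift i S) * W (card T) (nths es (shift i S)) (nths fs T) * ((-1) ^ Suc (rank {x. x < n \<and> x \<notin> shift i S} i)
             * H (K - card T) (nths (E i j) (- ins i S)) (nths fs (-T))))
            = (-1) ^ Suc i * (sg S * W (card T) (nths es (shift i S)) (nths fs T) * H (K - card T) (nths (E i j) (- ins i S)) (nths fs (-T)))"
            by (rule reorgZ[OF sgn])
          then show ?thesis unfolding c_def Z_def card_shift e1 e2 using c1 by simp
        next
          case False
          then show ?thesis unfolding c_def Z_def card_shift by simp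
        qed
      qed
      then show ?thesis using False jn by (simp add: sum_distrib_left)
    qed
  qed
  have "dBf br (\<lambda>k es fs. PP p W H es fs) k es fs = (\<Sum>j<n. \<Sum>i<j. \<Sum>S\<in>Pow {..<n - 1}.
     (if j \<in> ins i S then (\<Sum>T\<in>Pow {..<K}. Y i j (ins i S) T) else 0) +
     (-1) ^ p * (if j \<notin> shift i S then (\<Sum>T\<in>Pow {..<K}. Z i j (shift i S) T) else 0))"
    unfolding LHS by (intro sum.cong refl PW) auto
  also have "\<dots> = PP (Suc p) (dBf br W) H es fs + (-1) ^ p * PP p W (dBf br H) es fs"
    unfolding R1 R2 by (simp add: sum.distrib sum_distrib_left)
  finally show ?thesis .
qed

lemma dF_split: "dF br rho dE W k es fs = dMf dE W k es fs + dRf rho W k es fs + dBf br W k es fs"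
  unfolding dF_def dMf_def dRf_def dBf_def ..

lemma PP_addW:
  "PP p (\<lambda>k e f. A k e f + B k e f + C k e f) H es fs = PP p A H es fs + PP p B H es fs + PP p C H es fs"
  unfolding PP_def by (simp add: sum.distrib[symmetric] algebra_simps if_distrib cong: if_cong)

lemma PP_addH:
  "PP p W (\<lambda>k e f. A k e f + B k e f + C k e f) es fs = PP p W A es fs + PP p W B es fs + PP p W C es fs"
  unfolding PP_def by (simp add: sum.distrib[symmetric] algebra_simps if_distrib cong: if_cong)

lemma (in rder) main_PP:
  fixes W H :: "nat \<Rightarrow> 'e list \<Rightarrow> 'r list \<Rightarrow> 'r"
  shows "dF br rho dE (\<lambda>k es fs. PP p W H es fs) (length fs) es fs
     = PP (Suc p) (dF br rho dE W) H es fs + (-1) ^ p * PP p W (dF br rho dE H) es fs"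
proof -
  have eW: "dF br rho dE W = (\<lambda>k e f. dMf dE W k e f + dRf rho W k e f + dBf br W k e f)"
    by (intro ext) (rule dF_split)
  have eH: "dF br rho dE H = (\<lambda>k e f. dMf dE H k e f + dRf rho H k e f + dBf br H k e f)"
    by (intro ext) (rule dF_split)
  show ?thesis
    unfolding dF_split[of br rho dE "\<lambda>k es fs. PP p W H es fs"] eW eH PP_addW PP_addH
      part_M part_R part_B
    by (simp add: algebra_simps)
qed

lemma dF_cong:
  assumes "\<And>k' es' fs'. length es' + 2 * length fs' + 1 = length es + 2 * length fs \<Longrightarrow> length fs' = k' \<Longrightarrow> X k' es' fs' = Y k' es' fs'"
    and "length fs = k"
  shows "dF br rho dE X k es fs = dF br rho dE Y k es fs"
  unfolding dF_def
proof (intro arg_cong2[where f="(+)"])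
  show "(\<Sum>\<mu><k. X (k - 1) (dE (fs ! \<mu>) # es) (del \<mu> fs)) = (\<Sum>\<mu><k. Y (k - 1) (dE (fs ! \<mu>) # es) (del \<mu> fs))"
  proof (rule sum.cong[OF refl])
    fix \<mu> assume "\<mu> \<in> {..<k}"
    then have "length (del \<mu> fs) = k - 1" "\<mu> < k" using assms(2) by (auto simp: del_length)
    then show "X (k - 1) (dE (fs ! \<mu>) # es) (del \<mu> fs) = Y (k - 1) (dE (fs ! \<mu>) # es) (del \<mu> fs)"
      using assms by (intro assms(1)) auto
  qed
  show "(\<Sum>i<length es. (-1) ^ i * rho (es ! i) (X k (del i es) fs)) = (\<Sum>i<length es. (-1) ^ i * rho (es ! i) (Y k (del i es) fs))"
  proof (rule sum.cong[OF refl])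
    fix i assume "i \<in> {..<length es}"
    then have "length (del i es) + 1 = length es" by (auto simp: del_length)
    then show "(-1) ^ i * rho (es ! i) (X k (del i es) fs) = (-1) ^ i * rho (es ! i) (Y k (del i es) fs)"
      using assms by (subst assms(1)) auto
  qed
  show "(\<Sum>j<length es. \<Sum>i<j. (-1) ^ Suc i * X k (del i (es[j := br (es ! i) (es ! j)])) fs) =
        (\<Sum>j<length es. \<Sum>i<j. (-1) ^ Suc i * Y k (del i (es[j := br (es ! i) (es ! j)])) fs)"
  proof (rule sum.cong[OF refl], rule sum.cong[OF refl])
    fix j i assume "j \<in> {..<length es}" "i \<in> {..<j}"
    then have "length (del i (es[j := br (es ! i) (es ! j)])) + 1 = length es" by (auto simp: del_length)
    then show "(-1) ^ Suc i * X k (del i (es[j := br (es ! i) (es ! j)])) fs = (-1) ^ Suc i * Y k (del i (es[j := br (es ! i) (es ! j)])) fs"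
      using assms by (subst assms(1)) auto
  qed
qed

lemma PP_map: "PP p \<omega> \<eta> es (map dR fs) = PP p (toF dR \<omega>) (toF dR \<eta>) es fs"
  unfolding PP_def toF_def nths_map length_map ..

theorem mainTheorem1:
  fixes smE :: "'r::{comm_ring_1,real_algebra_1} \<Rightarrow> 'e::ab_group_add \<Rightarrow> 'e"
    and smO :: "'r \<Rightarrow> 'o::ab_group_add \<Rightarrow> 'o"
    and dR :: "'r \<Rightarrow> 'o" and ip :: "'e \<Rightarrow> 'e \<Rightarrow> 'r" and br :: "'e \<Rightarrow> 'e \<Rightarrow> 'e"
    and rho :: "'e \<Rightarrow> 'r \<Rightarrow> 'r" and dE :: "'r \<Rightarrow> 'e"
    and p q :: nat and \<omega> \<eta> :: "nat \<Rightarrow> 'e list \<Rightarrow> 'o list \<Rightarrow> 'r"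
  assumes "courant_algebroid smE smO dR ip br rho dE"
    and "cd_cochain smE smO dR ip p \<omega>"
    and "cd_cochain smE smO dR ip q \<eta>"
  shows "\<forall>k es fs. k \<le> (p + q + 1) div 2 \<longrightarrow> length es = p + q + 1 - 2 * k \<longrightarrow> length fs = k \<longrightarrow>
    dF br rho dE (toF dR (cprod p \<omega> q \<eta>)) k es fs =
      cprod (p + 1) (dF br rho dE (toF dR \<omega>)) q (toF dR \<eta>) k es fs
      + (-1) ^ p * cprod p (toF dR \<omega>) (q + 1) (dF br rho dE (toF dR \<eta>)) k es fs"
proof (intro allI impI)
  fix k and es :: "'e list" and fs :: "'r list"
  assume k: "k \<le> (p + q + 1) div 2" and les: "length es = p + q + 1 - 2 * k" and lfs: "length fs = k"
  have h1: "\<forall>x f g. rho x (f + g) = rho x f + rho x g"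
    using assms(1) unfolding courant_algebroid_def by (elim conjE)
  have h2: "\<forall>x f g. rho x (f * g) = f * rho x g + g * rho x f"
    using assms(1) unfolding courant_algebroid_def by (elim conjE)
  have rd: "rder rho"
    unfolding rder_def using h1 h2 by blast
  have len: "length es + 2 * k = p + q + 1" using k les by linarith
  have "dF br rho dE (toF dR (cprod p \<omega> q \<eta>)) k es fs =
        dF br rho dE (\<lambda>k es fs. PP p (toF dR \<omega>) (toF dR \<eta>) es fs) k es fs"
  proof (rule dF_cong[OF _ lfs])
    fix k' and es' :: "'e list" and fs' :: "'r list"
    assume a: "length es' + 2 * length fs' + 1 = length es + 2 * length fs" and b: "length fs' = k'"
    have "toF dR (cprod p \<omega> q \<eta>) k' es' fs' = cprod p \<omega> q \<eta> k' es' (map dR fs')"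
      unfolding toF_def ..
    also have "\<dots> = PP p \<omega> \<eta> es' (map dR fs')"
      by (rule cprod_PP) (use a b len lfs in auto)
    also have "\<dots> = PP p (toF dR \<omega>) (toF dR \<eta>) es' fs'" by (rule PP_map)
    finally show "toF dR (cprod p \<omega> q \<eta>) k' es' fs' = PP p (toF dR \<omega>) (toF dR \<eta>) es' fs'" .
  qed
  also have "\<dots> = PP (Suc p) (dF br rho dE (toF dR \<omega>)) (toF dR \<eta>) es fs
      + (-1) ^ p * PP p (toF dR \<omega>) (dF br rho dE (toF dR \<eta>)) es fs"
    using rder.main_PP[OF rd, where p=p and W="toF dR \<omega>" and H="toF dR \<eta>" and fs=fs and br=br and dE=dE and es=es] lfs by simp
  also have "PP (Suc p) (dF br rho dE (toF dR \<omega>)) (toF dR \<eta>) es fs = cprod (p + 1) (dF br rho dE (toF dR \<omega>)) q (toF dR \<eta>) k es fs"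
    unfolding Suc_eq_plus1 by (rule cprod_PP[symmetric]) (use len lfs in auto)
  also have "PP p (toF dR \<omega>) (dF br rho dE (toF dR \<eta>)) es fs = cprod p (toF dR \<omega>) (q + 1) (dF br rho dE (toF dR \<eta>)) k es fs"
    by (rule cprod_PP[symmetric]) (use len lfs in auto)
  finally show "dF br rho dE (toF dR (cprod p \<omega> q \<eta>)) k es fs =
      cprod (p + 1) (dF br rho dE (toF dR \<omega>)) q (toF dR \<eta>) k es fs
      + (-1) ^ p * cprod p (toF dR \<omega>) (q + 1) (dF br rho dE (toF dR \<eta>)) k es fs" .
qed

end
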